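(* Let $h\in\mathbb{R}[x_1,\ldots,x_n]$ be hyperbolic with respect to $\mathbf{e}$, and let $\mathbf{v}_1,\ldots,\mathbf{v}_m\in\Lambda_{++}(\mathbf{e})$. If $\mathbf{x}\in\Lambda_{++}(\mathbf{e})$, $1\leq i,j\leq m$, $\delta>1$ and $$\xi_j[h](\mathbf{x})\geq\frac{\delta}{\delta-1},$$ then $$\xi_i[h-\partial_jh](\mathbf{x}+\delta\mathbf{v}_j)\geq\xi_i[h](\mathbf{x}).$$
   Context: A homogeneous polynomial $h$ of degree $d$ is hyperbolic with respect to $\mathbf{e}\in\mathbb{R}^n$ if $h(\mathbf{e})\neq0$ and for every $\mathbf{x}\in\mathbb{R}^n$, $t\mapsto h(t\mathbf{e}-\mathbf{x})$ has only real zeros; writing $h(t\mathbf{e}-\mathbf{x})=h(\mathbf{e})\prod_{j=1}^d(t-\lambda_j(\mathbf{x}))$ defines the eigenvalues, and $\Lambda_{++}(\mathbf{e})=\{\mathbf{x}:\min_j\lambda_j(\mathbf{x})>0\}$. Notation: $\partial_j:=D_{\mathbf{v}_j}=\sum_k (\mathbf{v}_j)_k\,\partial/\partial x_k$ (directional derivative), and for a polynomial $g$, $\xi_j[g]:=g/\partial_jg$ (a rational function). *)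

theory Defs
  imports "HOL-Analysis.Analysis" "HOL-Computational_Algebra.Polynomial"
begin

definition poly_fun :: "(real^'n \<Rightarrow> real) \<Rightarrow> bool" where
  "poly_fun p \<longleftrightarrow> (\<exists>S c. finite (S :: ('n \<Rightarrow> nat) set) \<and>
      (\<forall>x. p x = (\<Sum>\<alpha>\<in>S. c \<alpha> * (\<Prod>i\<in>UNIV. (x $ i) ^ (\<alpha> i)))))"

definition homogeneous_poly :: "nat \<Rightarrow> (real^'n \<Rightarrow> real) \<Rightarrow> bool" where
  "homogeneous_poly d p \<longleftrightarrow> poly_fun p \<and> (\<forall>t x. p (t *\<^sub>R x) = t ^ d * p x)"

definition hyperbolic :: "(real^'n \<Rightarrow> real) \<Rightarrow> real^'n \<Rightarrow> bool" where
  "hyperbolic h e \<longleftrightarrow> (\<exists>d. homogeneous_poly d h) \<and> h e \<noteq> 0 \<and>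
     (\<forall>x. \<exists>q :: real poly. (\<forall>t. poly q t = h (t *\<^sub>R e - x)) \<and>
         (\<forall>z::complex. poly (map_poly of_real q) z = 0 \<longrightarrow> z \<in> \<real>))"

text \<open>Open hyperbolicity cone: all eigenvalues (the zeros of t \<mapsto> h(t e - x)) positive.\<close>
definition hcone :: "(real^'n \<Rightarrow> real) \<Rightarrow> real^'n \<Rightarrow> (real^'n) set" where
  "hcone h e = {x. \<forall>t. h (t *\<^sub>R e - x) = 0 \<longrightarrow> t > 0}"

definition dirderiv :: "real^'n \<Rightarrow> (real^'n \<Rightarrow> real) \<Rightarrow> real^'n \<Rightarrow> real" where
  "dirderiv v g x = deriv (\<lambda>s. g (x + s *\<^sub>R v)) 0"

definition xi :: "real^'n \<Rightarrow> (real^'n \<Rightarrow> real) \<Rightarrow> real^'n \<Rightarrow> real" where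
  "xi v g x = g x / dirderiv v g x"

end

theory Submission
  imports Defs "HOL-Complex_Analysis.Complex_Analysis"
    "HOL-Computational_Algebra.Fundamental_Theorem_Algebra"
    "HOL-Computational_Algebra.Polynomial_Factorial"
    "HOL-Computational_Algebra.Field_as_Ring"
begin

definition cv :: "real^'n \<Rightarrow> complex^'n" where "cv x = (\<chi> i. of_real (x$i))"

lemma cv_nth[simp]: "cv x $ i = of_real (x $ i)"
  by (simp add: cv_def)

lemma cv_add[simp]: "cv (x + y) = cv x + cv y"
  by (simp add: vec_eq_iff)
lemma cv_diff[simp]: "cv (x - y) = cv x - cv y"
  by (simp add: vec_eq_iff)
lemma cv_minus[simp]: "cv (- x) = - cv x"
  by (simp add: vec_eq_iff)
lemma cv_scale[simp]: "cv (r *\<^sub>R x) = of_real r *s cv x"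
  by (simp add: vec_eq_iff)

definition hom_rep :: "nat \<Rightarrow> ('n \<Rightarrow> nat) set \<Rightarrow> (('n\<Rightarrow>nat) \<Rightarrow> real) \<Rightarrow> (real^'n \<Rightarrow> real) \<Rightarrow> bool" where
 "hom_rep d S c h \<longleftrightarrow> finite S \<and> (\<forall>\<alpha>\<in>S. sum \<alpha> UNIV = d) \<and>
     (\<forall>x. h x = (\<Sum>\<alpha>\<in>S. c \<alpha> * (\<Prod>i\<in>UNIV. (x$i) ^ (\<alpha> i))))"

lemma prod_scale_pow:
  fixes t :: "'a::comm_semiring_1"
  shows "(\<Prod>i\<in>UNIV. (t * x i) ^ (\<alpha> i)) = t ^ (sum \<alpha> UNIV) * (\<Prod>i\<in>UNIV. (x i) ^ (\<alpha> i))"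
  by (simp add: power_mult_distrib prod.distrib power_sum)

lemma homogeneous_rep:
  fixes h :: "real^'n \<Rightarrow> real"
  assumes "homogeneous_poly d h"
  shows "\<exists>S c. hom_rep d S c h"
proof -
  from assms obtain S c where fS: "finite (S :: ('n \<Rightarrow> nat) set)"
      and rep: "\<And>x. h x = (\<Sum>\<alpha>\<in>S. c \<alpha> * (\<Prod>i\<in>UNIV. (x $ i) ^ (\<alpha> i)))"
      and hom: "\<And>t x. h (t *\<^sub>R x) = t ^ d * h x"
    unfolding homogeneous_poly_def poly_fun_def by blast
  define S' where "S' = {\<alpha>\<in>S. sum \<alpha> UNIV = d}"
  have "h x = (\<Sum>\<alpha>\<in>S'. c \<alpha> * (\<Prod>i\<in>UNIV. (x$i) ^ (\<alpha> i)))" for x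
  proof -
    define q where "q = (\<Sum>\<alpha>\<in>S. monom (c \<alpha> * (\<Prod>i\<in>UNIV. (x$i) ^ (\<alpha> i))) (sum \<alpha> UNIV))"
    have "poly q t = poly (monom (h x) d) t" for t
    proof -
      have "poly q t = (\<Sum>\<alpha>\<in>S. c \<alpha> * (\<Prod>i\<in>UNIV. (x$i) ^ (\<alpha> i)) * t ^ sum \<alpha> UNIV)"
        by (simp add: q_def poly_sum poly_monom)
      also have "\<dots> = h (t *\<^sub>R x)"
        by (simp add: rep prod_scale_pow[of t "\<lambda>i. x$i"] mult_ac)
      also have "\<dots> = poly (monom (h x) d) t" by (simp add: hom poly_monom mult_ac)
      finally show ?thesis .
    qed
    hence "q = monom (h x) d" using poly_eq_poly_eq_iff by blast
    hence "coeff q d = h x" by simp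
    moreover have "coeff q d = (\<Sum>\<alpha>\<in>S'. c \<alpha> * (\<Prod>i\<in>UNIV. (x$i) ^ (\<alpha> i)))"
      unfolding q_def coeff_sum coeff_monom S'_def using fS
      by (simp add: sum.inter_filter[symmetric] eq_commute)
    ultimately show ?thesis by simp
  qed
  moreover have "finite S'" using fS by (simp add: S'_def)
  ultimately show ?thesis unfolding hom_rep_def S'_def by blast
qed

locale hrep =
  fixes d :: nat and S :: "('n::finite \<Rightarrow> nat) set" and c :: "('n\<Rightarrow>nat) \<Rightarrow> real" and h :: "real^'n \<Rightarrow> real"
  assumes rep: "hom_rep d S c h"
begin

lemma finS: "finite S" and degS: "\<And>\<alpha>. \<alpha>\<in>S \<Longrightarrow> sum \<alpha> UNIV = d"
  and h_eq: "h x = (\<Sum>\<alpha>\<in>S. c \<alpha> * (\<Prod>i\<in>UNIV. (x$i) ^ (\<alpha> i)))"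
  using rep unfolding hom_rep_def by auto

definition H :: "complex^'n \<Rightarrow> complex" where
  "H z = (\<Sum>\<alpha>\<in>S. of_real (c \<alpha>) * (\<Prod>i\<in>UNIV. (z$i) ^ (\<alpha> i)))"

lemma H_cv: "H (cv x) = of_real (h x)"
  by (simp add: H_def h_eq)

lemma H_hom: "H (t *s z) = t ^ d * H z"
proof -
  have "H (t *s z) = (\<Sum>\<alpha>\<in>S. t ^ d * (of_real (c \<alpha>) * (\<Prod>i\<in>UNIV. (z$i) ^ (\<alpha> i))))"
    unfolding H_def by (intro sum.cong refl) (simp add: prod_scale_pow[of t "\<lambda>i. z$i"] degS)
  thus ?thesis by (simp add: H_def sum_distrib_left)
qed

lemma h_hom: "h (t *\<^sub>R x) = t ^ d * h x"
  using H_hom[of "of_real t" "cv x"] H_cv[of "t *\<^sub>R x"] H_cv[of x]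
  by (metis cv_scale of_real_eq_iff of_real_mult of_real_power)

lemma H_cnj: "H (\<chi> i. cnj (z$i)) = cnj (H z)"
  by (simp add: H_def)

lemma H_cont: "continuous_on A H"
  unfolding H_def by (intro continuous_intros)

definition LP :: "complex^'n \<Rightarrow> complex^'n \<Rightarrow> complex poly" where
  "LP U V = (\<Sum>\<alpha>\<in>S. [:of_real (c \<alpha>):] * (\<Prod>i\<in>UNIV. [:U$i, V$i:] ^ (\<alpha> i)))"

lemma LP_poly: "poly (LP U V) \<tau> = H (U + \<tau> *s V)"
  by (simp add: LP_def H_def poly_sum poly_prod mult_ac)

definition BP :: "complex^'n \<Rightarrow> complex^'n \<Rightarrow> complex^'n \<Rightarrow> complex poly poly" where
  "BP U V W = (\<Sum>\<alpha>\<in>S. [:[:of_real (c \<alpha>):]:] * (\<Prod>i\<in>UNIV. [:[:U$i, W$i:], [:V$i:]:] ^ (\<alpha> i)))"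

lemma BP_poly: "poly (poly (BP U V W) [:s:]) t = H (U + s *s V + t *s W)"
  by (simp add: BP_def H_def poly_sum poly_prod mult_ac)

end


lemma uniform_limit_param:
  fixes g :: "real \<Rightarrow> complex \<Rightarrow> complex"
  assumes cont: "continuous_on UNIV (\<lambda>p. g (fst p) (snd p))"
    and lim: "\<sigma>s \<longlonglongrightarrow> \<sigma>0" and K: "compact K"
  shows "uniform_limit K (\<lambda>n. g (\<sigma>s n)) (g \<sigma>0) sequentially"
proof -
  define C where "C = insert \<sigma>0 (range \<sigma>s)"
  have "compact (C \<times> K)" unfolding C_def
    by (intro compact_Times compact_sequence_with_limit lim K)
  hence uc: "uniformly_continuous_on (C \<times> K) (\<lambda>p. g (fst p) (snd p))"
    by (intro compact_uniformly_continuous continuous_on_subset[OF cont]) auto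
  show ?thesis unfolding uniform_limit_iff
  proof (intro allI impI)
    fix e :: real assume "e > 0"
    with uc obtain dd where dd: "dd > 0"
      and H: "\<And>p p'. p \<in> C \<times> K \<Longrightarrow> p' \<in> C \<times> K \<Longrightarrow> dist p' p < dd \<Longrightarrow>
               dist (g (fst p') (snd p')) (g (fst p) (snd p)) < e"
      unfolding uniformly_continuous_on_def by metis
    have "\<forall>\<^sub>F n in sequentially. dist (\<sigma>s n) \<sigma>0 < dd"
      using lim dd by (simp add: tendsto_iff)
    thus "\<forall>\<^sub>F n in sequentially. \<forall>x\<in>K. dist (g (\<sigma>s n) x) (g \<sigma>0 x) < e"
    proof eventually_elim
      case (elim n)
      show ?case
      proof
        fix x assume "x \<in> K"
        have "dist (\<sigma>s n, x) (\<sigma>0, x) < dd"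
          using elim by (simp add: dist_Pair_Pair)
        thus "dist (g (\<sigma>s n) x) (g \<sigma>0 x) < e"
          using H[of "(\<sigma>0, x)" "(\<sigma>s n, x)"] \<open>x\<in>K\<close> by (auto simp: C_def)
      qed
    qed
  qed
qed

lemma hurwitz_limit:
  fixes g :: "real \<Rightarrow> complex \<Rightarrow> complex"
  assumes cont: "continuous_on UNIV (\<lambda>p. g (fst p) (snd p))"
    and holo: "\<And>\<sigma>. g \<sigma> holomorphic_on {z. Im z > 0}"
    and lim: "\<sigma>s \<longlonglongrightarrow> \<sigma>0"
    and nz: "\<And>n z. Im z > 0 \<Longrightarrow> g (\<sigma>s n) z \<noteq> 0"
    and z1: "Im z1 > 0" "g \<sigma>0 z1 \<noteq> 0"
    and z: "Im z > 0"
  shows "g \<sigma>0 z \<noteq> 0"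
proof
  assume g0: "g \<sigma>0 z = 0"
  have "g \<sigma>0 z \<noteq> 0"
  proof (rule Hurwitz_no_zeros[of "{z. Im z > 0}" "\<lambda>n. g (\<sigma>s n)" "g \<sigma>0"])
    show "open {z. 0 < Im z}" by (rule open_halfspace_Im_gt)
    show "connected {z. 0 < Im z}" by (intro convex_connected convex_halfspace_Im_gt)
    show "\<And>n. g (\<sigma>s n) holomorphic_on {z. 0 < Im z}" by (rule holo)
    show "g \<sigma>0 holomorphic_on {z. 0 < Im z}" by (rule holo)
    show "\<And>K. compact K \<Longrightarrow> K \<subseteq> {z. 0 < Im z} \<Longrightarrow> uniform_limit K (\<lambda>n. g (\<sigma>s n)) (g \<sigma>0) sequentially"
      by (rule uniform_limit_param[OF cont lim])
    show "\<not> g \<sigma>0 constant_on {z. 0 < Im z}"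
      using g0 z z1 unfolding constant_on_def by force
    show "\<And>n z. z \<in> {z. 0 < Im z} \<Longrightarrow> g (\<sigma>s n) z \<noteq> 0" using nz by auto
    show "z \<in> {z. 0 < Im z}" using z by auto
  qed
  with g0 show False by simp
qed

lemma root_continuation:
  fixes g :: "real \<Rightarrow> complex \<Rightarrow> complex"
  assumes cont: "continuous_on UNIV (\<lambda>p. g (fst p) (snd p))"
    and holo: "\<And>\<sigma>. g \<sigma> holomorphic_on {z. Im z > 0}"
    and bound: "\<And>\<sigma> z. \<sigma> \<in> {0..1} \<Longrightarrow> R \<le> norm z \<Longrightarrow> g \<sigma> z \<noteq> 0"
    and real: "\<And>\<sigma> z. \<sigma> \<in> {0..1} \<Longrightarrow> Im z = 0 \<Longrightarrow> g \<sigma> z \<noteq> 0"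
    and start: "\<And>z. Im z > 0 \<Longrightarrow> g 0 z \<noteq> 0"
    and \<sigma>: "\<sigma> \<in> {0..1}" and z: "Im z > 0"
  shows "g \<sigma> z \<noteq> 0"
proof -
  define R' where "R' = max R 1"
  define K where "K = cball 0 R' \<inter> {z. 0 \<le> Im z}"
  have cK: "compact K" unfolding K_def
    by (intro compact_Int_closed compact_cball closed_halfspace_Im_ge)
  define Z where "Z = fst ` (({0..1} \<times> K) \<inter> {p. g (fst p) (snd p) = 0})"
  have clz: "closed {p. g (fst p) (snd p) = 0}"
    using continuous_closed_preimage_constant[OF cont closed_UNIV, of 0] by simp
  have cZ: "compact Z" unfolding Z_def
    by (intro compact_continuous_image continuous_intros compact_Int_closed compact_Times cK
        compact_Icc clz)
  have Zchar: "\<sigma>' \<in> Z" if "\<sigma>' \<in> {0..1}" "Im w > 0" "g \<sigma>' w = 0" for \<sigma>' w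
  proof -
    have "norm w < R'" using bound[OF that(1), of w] that(3) by (force simp: R'_def)
    hence "w \<in> K" using that by (auto simp: K_def)
    thus ?thesis using that unfolding Z_def by (auto intro!: image_eqI[of _ fst "(\<sigma>', w)"])
  qed
  have Zsub: "Z \<subseteq> {0..1}" unfolding Z_def by auto
  have Zzero: "\<exists>w. Im w > 0 \<and> g \<sigma>' w = 0" if sZ: "\<sigma>' \<in> Z" for \<sigma>'
  proof -
    obtain w where w: "\<sigma>' \<in> {0..1}" "w \<in> K" "g \<sigma>' w = 0" using sZ unfolding Z_def by fastforce
    hence "Im w \<noteq> 0" using real by blast
    with w(2) have "Im w > 0" by (auto simp: K_def)
    with w show ?thesis by blast
  qed
  show ?thesis
  proof (rule ccontr)
    assume "\<not> g \<sigma> z \<noteq> 0"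
    hence "\<sigma> \<in> Z" using Zchar \<sigma> z by auto
    hence Zne: "Z \<noteq> {}" by auto
    define m where "m = Inf Z"
    have mZ: "m \<in> Z" unfolding m_def
      using cZ Zne by (intro closed_contains_Inf compact_imp_closed bounded_imp_bdd_below compact_imp_bounded)
    have m0: "m > 0"
    proof -
      have "0 \<notin> Z" using Zzero start by blast
      moreover have "m \<ge> 0" using mZ Zsub by auto
      ultimately show ?thesis using mZ by (cases "m = 0") auto
    qed
    have mle: "m \<le> 1" using mZ Zsub by auto
    define \<sigma>s where "\<sigma>s = (\<lambda>n::nat. m - m / real (n + 2))"
    have lim: "\<sigma>s \<longlonglongrightarrow> m"
    proof -
      have "(\<lambda>n::nat. m / real (n + 2)) \<longlonglongrightarrow> 0"
        using LIMSEQ_ignore_initial_segment[OF lim_const_over_n[of m], of 2] by simp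
      thus ?thesis unfolding \<sigma>s_def using tendsto_diff[OF tendsto_const[of m]] by fastforce
    qed
    have nz: "g (\<sigma>s n) w \<noteq> 0" if "Im w > 0" for n w
    proof
      assume g0: "g (\<sigma>s n) w = 0"
      have pos: "m / real (n+2) > 0" using m0 by simp
      have le: "m / real (n+2) \<le> m" using m0 by (simp add: divide_le_eq)
      have "\<sigma>s n \<in> {0..1}" using pos le mle unfolding \<sigma>s_def by auto
      hence "\<sigma>s n \<in> Z" using Zchar that g0 by blast
      hence "m \<le> \<sigma>s n" unfolding m_def
        by (intro cInf_lower bounded_imp_bdd_below compact_imp_bounded cZ)
      thus False using pos unfolding \<sigma>s_def by simp
    qed
    obtain w where w: "Im w > 0" "g m w = 0" using Zzero mZ by blast
    define z1 where "z1 = \<i> * of_real R'"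
    have "norm z1 = R'" by (simp add: z1_def R'_def norm_mult)
    hence z1: "Im z1 > 0" "g m z1 \<noteq> 0" using bound[of m z1] m0 mle
      by (auto simp: z1_def R'_def)
    have "g m w \<noteq> 0" by (rule hurwitz_limit[OF cont holo lim nz z1 w(1)])
    with w show False by simp
  qed
qed


lemma poly_map_of_real: "poly (map_poly of_real p) (of_real x :: complex) = of_real (poly p x)"
  by (induction p) (simp_all add: map_poly_pCons)

lemma poly_eq_on_reals:
  fixes p q :: "complex poly"
  assumes "\<And>t::real. poly p (of_real t) = poly q (of_real t)"
  shows "p = q"
proof (rule ccontr)
  assume "p \<noteq> q"
  hence "p - q \<noteq> 0" by simp
  hence "finite {x. poly (p - q) x = 0}" by (rule poly_roots_finite)
  moreover have "range (of_real :: real \<Rightarrow> complex) \<subseteq> {x. poly (p - q) x = 0}"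
    using assms by auto
  moreover have "infinite (range (of_real :: real \<Rightarrow> complex))"
    by (metis finite_imageD inj_of_real infinite_UNIV_char_0)
  ultimately show False using finite_subset by blast
qed

lemma cv_zero[simp]: "cv 0 = 0" by (simp add: vec_eq_iff)

lemma cont_vec_nth: "continuous_on A f \<Longrightarrow> continuous_on A (\<lambda>x. vec_nth (f x) i)"
  by (simp add: continuous_on_def tendsto_vec_nth)

lemma cont_smult_vec[continuous_intros]:
  fixes f :: "'a::topological_space \<Rightarrow> complex" and g :: "'a \<Rightarrow> complex^'n"
  shows "continuous_on A f \<Longrightarrow> continuous_on A g \<Longrightarrow> continuous_on A (\<lambda>x. f x *s g x)"
  unfolding vector_scalar_mult_def
  by (intro continuous_on_vec_lambda continuous_intros cont_vec_nth)

lemma cv_cont: "continuous_on A f \<Longrightarrow> continuous_on A (\<lambda>x. cv (f x))"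
  unfolding cv_def by (intro continuous_on_vec_lambda continuous_intros)

context hrep
begin

definition hypC :: "real^'n \<Rightarrow> bool" where
  "hypC u \<longleftrightarrow> (\<forall>y \<tau>. H (cv y + \<tau> *s cv u) = 0 \<longrightarrow> Im \<tau> = 0)"

lemma H_line: "H (U + \<tau> *s V) = (\<Sum>\<alpha>\<in>S. of_real (c \<alpha>) * (\<Prod>i\<in>UNIV. (U$i + \<tau> * V$i) ^ (\<alpha> i)))"
  by (simp add: H_def)

lemma H_line_holo: "(\<lambda>\<tau>. H (U + \<tau> *s V)) holomorphic_on A"
  unfolding H_line by (intro holomorphic_intros)

lemma H_comp_cont: "continuous_on A f \<Longrightarrow> continuous_on A (\<lambda>x. H (f x))"
  using continuous_on_compose2[OF H_cont[of UNIV]] by auto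

lemma h_neg: "h (- x) = (-1) ^ d * h x"
  using h_hom[of "-1" x] by simp

lemma hypC_nz: "hypC u \<Longrightarrow> h u \<noteq> 0"
proof
  assume hy: "hypC u" and h0: "h u = 0"
  have "H (cv 0 + \<i> *s cv u) = \<i> ^ d * H (cv u)" by (simp add: H_hom[symmetric])
  also have "\<dots> = 0" by (simp add: H_cv h0)
  finally have "Im \<i> = 0" using hy unfolding hypC_def by blast
  thus False by simp
qed

lemma hcone_nz: "y \<in> hcone h u \<Longrightarrow> h y \<noteq> 0"
  unfolding hcone_def using h_neg[of y] by (force)

lemma hyperbolic_hypC:
  assumes "hyperbolic h e" shows "hypC e"
  unfolding hypC_def
proof (intro allI impI)
  fix y \<tau> assume H0: "H (cv y + \<tau> *s cv e) = 0"
  obtain q :: "real poly" where q: "\<And>t. poly q t = h (t *\<^sub>R e - (- y))"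
    and qr: "\<And>z::complex. poly (map_poly of_real q) z = 0 \<Longrightarrow> z \<in> \<real>"
    using assms unfolding hyperbolic_def by blast
  have "LP (cv y) (cv e) = map_poly of_real q"
  proof (rule poly_eq_on_reals)
    fix t :: real
    have "poly (LP (cv y) (cv e)) (of_real t) = H (cv y + of_real t *s cv e)" by (simp add: LP_poly)
    also have "\<dots> = H (cv (y + t *\<^sub>R e))" by simp
    also have "\<dots> = of_real (poly q t)" by (simp only: H_cv q) (simp add: add.commute)
    finally show "poly (LP (cv y) (cv e)) (of_real t) = poly (map_poly of_real q) (of_real t)"
      by (simp add: poly_map_of_real)
  qed
  hence "poly (map_poly of_real q) \<tau> = 0" using H0 by (simp flip: LP_poly)
  hence "\<tau> \<in> \<real>" by (rule qr)
  thus "Im \<tau> = 0" by (simp add: complex_is_Real_iff)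
qed

lemma root_bound:
  fixes W :: "real \<Rightarrow> complex^'n" and C :: "real \<Rightarrow> real^'n"
  assumes cW: "continuous_on UNIV W" and cC: "continuous_on UNIV C"
    and nz: "\<And>\<sigma>. \<sigma> \<in> {0..1} \<Longrightarrow> h (C \<sigma>) \<noteq> 0"
  shows "\<exists>R. \<forall>\<sigma>\<in>{0..1}. \<forall>\<tau>. R \<le> norm \<tau> \<longrightarrow> H (W \<sigma> + \<tau> *s cv (C \<sigma>)) \<noteq> 0"
proof -
  define \<phi> where "\<phi> = (\<lambda>p::real\<times>complex. H (snd p *s W (fst p) + cv (C (fst p))))"
  have c\<phi>: "continuous_on UNIV \<phi>" unfolding \<phi>_def
    by (intro H_comp_cont continuous_intros cv_cont continuous_on_compose2[OF cW]
        continuous_on_compose2[OF cC]) auto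
  have clz: "closed {p. \<phi> p = 0}"
    using continuous_closed_preimage_constant[OF c\<phi> closed_UNIV, of 0] by simp
  define Z where "Z = ({0..1} \<times> cball 0 1) \<inter> {p. \<phi> p = 0}"
  have cZ: "compact Z" unfolding Z_def
    by (intro compact_Int_closed compact_Times compact_Icc compact_cball clz)
  have key: "H (W \<sigma> + \<tau> *s cv (C \<sigma>)) = \<tau> ^ d * \<phi> (\<sigma>, inverse \<tau>)" if "\<tau> \<noteq> 0" for \<sigma> \<tau>
  proof -
    have eq: "W \<sigma> + \<tau> *s cv (C \<sigma>) = \<tau> *s (inverse \<tau> *s W \<sigma> + cv (C \<sigma>))"
      using that by (simp add: vec_eq_iff field_simps)
    show ?thesis unfolding \<phi>_def fst_conv snd_conv eq H_hom ..
  qed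
  have Z0: "(\<sigma>, 0) \<notin> Z" for \<sigma>
    using nz[of \<sigma>] by (auto simp: Z_def \<phi>_def H_cv)
  show ?thesis
  proof (cases "Z = {}")
    case True
    show ?thesis
    proof (intro exI[of _ 1] ballI allI impI)
      fix \<sigma> :: real and \<tau> :: complex assume s: "\<sigma> \<in> {0..1}" and n: "1 \<le> norm \<tau>"
      hence t0: "\<tau> \<noteq> 0" by auto
      have "norm (inverse \<tau>) \<le> 1" using n by (simp add: norm_inverse inverse_le_1_iff)
      hence "\<phi> (\<sigma>, inverse \<tau>) \<noteq> 0"
      proof (intro notI)
        assume "norm (inverse \<tau>) \<le> 1" "\<phi> (\<sigma>, inverse \<tau>) = 0"
        hence "(\<sigma>, inverse \<tau>) \<in> Z" using s by (simp add: Z_def dist_norm)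
        with True show False by simp
      qed
      thus "H (W \<sigma> + \<tau> *s cv (C \<sigma>)) \<noteq> 0" using key[OF t0] t0 by simp
    qed
  next
    case False
    have "compact ((\<lambda>p. norm (snd p)) ` Z)"
      by (intro compact_continuous_image continuous_intros cZ)
    then obtain p0 where p0: "p0 \<in> Z" and min: "\<And>p. p \<in> Z \<Longrightarrow> norm (snd p0) \<le> norm (snd p)"
      using compact_attains_inf[of "(\<lambda>p. norm (snd p)) ` Z"] False by auto
    define r where "r = norm (snd p0)"
    have "snd p0 \<noteq> 0" using p0 Z0[of "fst p0"] by (metis prod.collapse)
    hence r0: "r > 0" by (simp add: r_def)
    show ?thesis
    proof (intro exI[of _ "max 1 (2 / r)"] ballI allI impI)
      fix \<sigma> :: real and \<tau> :: complex assume s: "\<sigma> \<in> {0..1}" and n: "max 1 (2/r) \<le> norm \<tau>"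
      hence t0: "\<tau> \<noteq> 0" by auto
      have n1: "1 \<le> norm \<tau>" and n2: "2 / r \<le> norm \<tau>" using n by auto
      have "norm (inverse \<tau>) \<le> 1" using n1 by (simp add: norm_inverse inverse_le_1_iff)
      moreover have "norm (inverse \<tau>) < r"
      proof -
        have "norm \<tau> > 0" using t0 by simp
        have "norm (inverse \<tau>) = 1 / norm \<tau>" by (simp add: norm_inverse divide_inverse)
        also have "\<dots> \<le> r / 2" using n2 r0 \<open>norm \<tau> > 0\<close> by (simp add: divide_le_eq field_simps)
        also have "\<dots> < r" using r0 by simp
        finally show ?thesis .
      qed
      ultimately have "\<phi> (\<sigma>, inverse \<tau>) \<noteq> 0"
        using min[of "(\<sigma>, inverse \<tau>)"] s unfolding Z_def r_def by force
      thus "H (W \<sigma> + \<tau> *s cv (C \<sigma>)) \<noteq> 0" using key[OF t0] t0 by simp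
    qed
  qed
qed

lemma hcone_affine:
  assumes "h u \<noteq> 0" "y \<in> hcone h u" "\<sigma> \<in> {0..1}"
  shows "(1 - \<sigma>) *\<^sub>R u + \<sigma> *\<^sub>R y \<in> hcone h u"
  unfolding hcone_def
proof (intro CollectI allI impI)
  fix t assume h0: "h (t *\<^sub>R u - ((1 - \<sigma>) *\<^sub>R u + \<sigma> *\<^sub>R y)) = 0"
  show "t > 0"
  proof (cases "\<sigma> = 0")
    case True
    with h0 have "h ((t - 1) *\<^sub>R u) = 0" by (simp add: algebra_simps)
    hence "t - 1 = 0" using assms(1) by (simp add: h_hom)
    thus ?thesis by simp
  next
    case False
    hence s0: "\<sigma> > 0" using assms(3) by auto
    have e1: "\<sigma> *\<^sub>R (((t - 1 + \<sigma>) / \<sigma>) *\<^sub>R u - y) = (t - 1 + \<sigma>) *\<^sub>R u - \<sigma> *\<^sub>R y"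
      using s0 by (simp add: scaleR_diff_right)
    have e2: "t *\<^sub>R u - ((1 - \<sigma>) *\<^sub>R u + \<sigma> *\<^sub>R y) = (t - 1 + \<sigma>) *\<^sub>R u - \<sigma> *\<^sub>R y"
      by (simp add: algebra_simps)
    have "h (t *\<^sub>R u - ((1 - \<sigma>) *\<^sub>R u + \<sigma> *\<^sub>R y)) = \<sigma> ^ d * h (((t - 1 + \<sigma>) / \<sigma>) *\<^sub>R u - y)"
      unfolding e2 e1[symmetric] by (rule h_hom)
    with h0 have "h (((t - 1 + \<sigma>) / \<sigma>) *\<^sub>R u - y) = 0" using s0 by simp
    hence "(t - 1 + \<sigma>) / \<sigma> > 0" using assms(2) unfolding hcone_def by blast
    hence "t - 1 + \<sigma> > 0" using s0 by (simp add: zero_less_divide_iff)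
    thus ?thesis using assms(3) by auto
  qed
qed

lemma hcone_swap:
  assumes "h u \<noteq> 0" "v \<in> hcone h u" "h (t *\<^sub>R v - u) = 0"
  shows "t > 0"
proof (cases "t = 0")
  case True
  thus ?thesis using assms(1,3) h_neg[of u] by simp
next
  case False
  have eq: "t *\<^sub>R v - u = (- t) *\<^sub>R ((1 / t) *\<^sub>R u - v)" using False by (simp add: algebra_simps)
  have "h (t *\<^sub>R v - u) = (- t) ^ d * h ((1 / t) *\<^sub>R u - v)" unfolding eq by (rule h_hom)
  hence "h ((1 / t) *\<^sub>R u - v) = 0" using assms(3) False by simp
  hence "1 / t > 0" using assms(2) unfolding hcone_def by blast
  thus ?thesis by simp
qed

lemma vec_cnj: "(\<chi> i. cnj ((cv y + \<tau> *s cv a) $ i)) = cv y + cnj \<tau> *s cv a"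
  by (simp add: vec_eq_iff)

lemma garding_half:
  assumes hy: "hypC e" and a: "a \<in> hcone h e" and \<tau>: "Im \<tau> > 0"
  shows "H (cv y + \<tau> *s cv a) \<noteq> 0"
proof -
  have he: "h e \<noteq> 0" using hypC_nz[OF hy] .
  define as where "as = (\<lambda>\<sigma>::real. (1 - \<sigma>) *\<^sub>R e + \<sigma> *\<^sub>R a)"
  have as_nz: "h (as \<sigma>) \<noteq> 0" if "\<sigma> \<in> {0..1}" for \<sigma>
    using hcone_nz[OF hcone_affine[OF he a that]] by (simp add: as_def)
  have cas: "continuous_on UNIV as" unfolding as_def by (intro continuous_intros)
  have step1: "H (cv y + (\<i> * of_real \<alpha>) *s cv e + z *s cv a) \<noteq> 0" if al: "\<alpha> > 0" and z: "Im z > 0" for \<alpha> z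
  proof -
    define g where "g = (\<lambda>\<sigma> z. H ((cv y + (\<i> * of_real \<alpha>) *s cv e) + z *s cv (as \<sigma>)))"
    have "\<exists>R. \<forall>\<sigma>\<in>{0..1}. \<forall>\<tau>. R \<le> norm \<tau> \<longrightarrow> H ((cv y + (\<i> * of_real \<alpha>) *s cv e) + \<tau> *s cv (as \<sigma>)) \<noteq> 0"
      by (rule root_bound[OF _ cas as_nz]) (intro continuous_intros)
    then obtain R where R: "\<And>\<sigma> z. \<sigma> \<in> {0..1} \<Longrightarrow> R \<le> norm z \<Longrightarrow> g \<sigma> z \<noteq> 0"
      unfolding g_def by blast
    have "g 1 z \<noteq> 0"
    proof (rule root_continuation[where R = R and g = g])
      show "continuous_on UNIV (\<lambda>p. g (fst p) (snd p))" unfolding g_def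
        by (auto intro!: H_comp_cont continuous_intros cv_cont continuous_on_compose2[OF cas])
      show "g \<sigma> holomorphic_on {z. 0 < Im z}" for \<sigma> unfolding g_def by (rule H_line_holo)
      show "g \<sigma> z \<noteq> 0" if "\<sigma> \<in> {0..1}" "R \<le> norm z" for \<sigma> z using R that by blast
      show "g \<sigma> z \<noteq> 0" if "\<sigma> \<in> {0..1}" "Im z = 0" for \<sigma> z
      proof
        assume g0: "g \<sigma> z = 0"
        have "z = of_real (Re z)" using that(2) by (simp add: complex_eq_iff)
        hence "cv y + (\<i> * of_real \<alpha>) *s cv e + z *s cv (as \<sigma>) = cv (y + Re z *\<^sub>R as \<sigma>) + (\<i> * of_real \<alpha>) *s cv e"
          by (simp add: vec_eq_iff algebra_simps)
        with g0 have "Im (\<i> * of_real \<alpha>) = 0" using hy unfolding hypC_def g_def by metis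
        thus False using al by simp
      qed
      show "g 0 z \<noteq> 0" if "Im z > 0" for z
      proof
        assume g0: "g 0 z = 0"
        have "cv y + (\<i> * of_real \<alpha>) *s cv e + z *s cv (as 0) = cv y + (\<i> * of_real \<alpha> + z) *s cv e"
          by (simp add: as_def vec_eq_iff algebra_simps)
        with g0 have "Im (\<i> * of_real \<alpha> + z) = 0" using hy unfolding hypC_def g_def by metis
        thus False using al that by simp
      qed
      show "(1::real) \<in> {0..1}" by simp
      show "Im z > 0" by (rule z)
    qed
    thus ?thesis by (simp add: g_def as_def)
  qed
  define g where "g = (\<lambda>\<alpha>::real. \<lambda>z. H ((cv y + (\<i> * of_real \<alpha>) *s cv e) + z *s cv a))"
  have "\<exists>R. \<forall>\<sigma>\<in>{0..1}. \<forall>\<tau>. R \<le> norm \<tau> \<longrightarrow> H (cv y + \<tau> *s cv a) \<noteq> 0"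
    using root_bound[of "\<lambda>_. cv y" "\<lambda>_. a"] hcone_nz[OF a] by (auto intro: continuous_intros)
  then obtain R where R: "\<And>\<sigma> z. \<sigma> \<in> {0..(1::real)} \<Longrightarrow> R \<le> norm z \<Longrightarrow> H (cv y + z *s cv a) \<noteq> 0"
    by blast
  define z1 where "z1 = \<i> * of_real (max R 1)"
  have nz1: "norm z1 = max R 1" by (simp add: z1_def norm_mult)
  have "g 0 \<tau> \<noteq> 0"
  proof (rule hurwitz_limit[where g = g and \<sigma>s = "\<lambda>n. 1 / real (Suc n)"])
    show "continuous_on UNIV (\<lambda>p. g (fst p) (snd p))" unfolding g_def
      by (intro H_comp_cont continuous_intros cv_cont)
    show "g \<alpha> holomorphic_on {z. 0 < Im z}" for \<alpha>
      unfolding g_def by (rule H_line_holo)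
    show "(\<lambda>n. 1 / real (Suc n)) \<longlonglongrightarrow> 0" using LIMSEQ_ignore_initial_segment[OF lim_const_over_n[of 1], of 1] by simp
    show "g (1 / real (Suc n)) z \<noteq> 0" if "Im z > 0" for n z
      using step1[of "1 / real (Suc n)" z] that by (simp add: g_def)
    show "0 < Im z1" by (simp add: z1_def)
    show "g 0 z1 \<noteq> 0" unfolding g_def using R[of "0::real" z1] nz1 by auto
    show "0 < Im \<tau>" by (rule \<tau>)
  qed
  thus ?thesis by (simp add: g_def)
qed

lemma garding:
  assumes hy: "hypC e" and a: "a \<in> hcone h e"
  shows "hypC a"
  unfolding hypC_def
proof (intro allI impI)
  fix y \<tau> assume H0: "H (cv y + \<tau> *s cv a) = 0"
  show "Im \<tau> = 0"
  proof (rule ccontr)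
    assume "Im \<tau> \<noteq> 0"
    then consider "Im \<tau> > 0" | "Im (cnj \<tau>) > 0" by (cases "Im \<tau> > 0") auto
    thus False
    proof cases
      case 1 thus False using garding_half[OF hy a 1, of y] H0 by simp
    next
      case 2
      have "H (cv y + cnj \<tau> *s cv a) = cnj (H (cv y + \<tau> *s cv a))"
        using H_cnj[of "cv y + \<tau> *s cv a"] by (simp only: vec_cnj)
      thus False using garding_half[OF hy a 2, of y] H0 by simp
    qed
  qed
qed

end


context hrep
begin

lemma cone_incl:
  assumes hu: "hypC u" and hv: "hypC v" and v: "v \<in> hcone h u" and y: "y \<in> hcone h u"
  shows "y \<in> hcone h v"
proof -
  have hu0: "h u \<noteq> 0" by (rule hypC_nz[OF hu])
  have hv0: "h v \<noteq> 0" by (rule hypC_nz[OF hv])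
  define ys where "ys = (\<lambda>\<sigma>::real. (1 - \<sigma>) *\<^sub>R u + \<sigma> *\<^sub>R y)"
  have ys_cone: "ys \<sigma> \<in> hcone h u" if "\<sigma> \<in> {0..1}" for \<sigma>
    unfolding ys_def by (rule hcone_affine[OF hu0 y that])
  have cys: "continuous_on UNIV ys" unfolding ys_def by (intro continuous_intros)
  define g where "g = (\<lambda>\<sigma> z. H (cv (- ys \<sigma>) + (\<i> * z) *s cv v))"
  have "\<exists>R. \<forall>\<sigma>\<in>{0..1}. \<forall>\<tau>. R \<le> norm \<tau> \<longrightarrow> H (cv (- ys \<sigma>) + \<tau> *s cv ((\<lambda>_. v) \<sigma>)) \<noteq> 0"
    by (rule root_bound) (auto intro!: continuous_intros cv_cont cys hv0)
  then obtain R where R: "\<And>\<sigma> z. \<sigma> \<in> {0..(1::real)} \<Longrightarrow> R \<le> norm z \<Longrightarrow> H (cv (- ys \<sigma>) + z *s cv v) \<noteq> 0"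
    by blast
  have main: "g 1 z \<noteq> 0" if z: "Im z > 0" for z
  proof (rule root_continuation[where R = R and g = g])
    show "continuous_on UNIV (\<lambda>p. g (fst p) (snd p))" unfolding g_def
      by (auto intro!: H_comp_cont continuous_intros cv_cont continuous_on_compose2[OF cys])
    show "g \<sigma> holomorphic_on {z. 0 < Im z}" for \<sigma>
    proof -
      have "(\<lambda>z. H (cv (- ys \<sigma>) + z *s cv v)) \<circ> (\<lambda>z. \<i> * z) holomorphic_on {z. 0 < Im z}"
        by (intro holomorphic_on_compose holomorphic_intros H_line_holo)
      thus ?thesis by (simp add: g_def o_def)
    qed
    show "g \<sigma> z \<noteq> 0" if "\<sigma> \<in> {0..1}" "R \<le> norm z" for \<sigma> z
      using R[of \<sigma> "\<i> * z"] that by (simp add: g_def norm_mult)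
    show "g \<sigma> z \<noteq> 0" if s: "\<sigma> \<in> {0..1}" and iz: "Im z = 0" for \<sigma> z
    proof
      assume g0: "g \<sigma> z = 0"
      hence "Im (\<i> * z) = 0" using hv unfolding hypC_def g_def by blast
      hence "z = 0" using iz by (simp add: complex_eq_iff)
      with g0 have "h (- ys \<sigma>) = 0" by (simp add: g_def H_cv del: cv_minus)
      moreover have "h (0 *\<^sub>R u - ys \<sigma>) \<noteq> 0" using ys_cone[OF s] unfolding hcone_def by force
      ultimately show False by simp
    qed
    show "g 0 z \<noteq> 0" if iz: "Im z > 0" for z
    proof
      assume g0: "g 0 z = 0"
      hence "Im (\<i> * z) = 0" using hv unfolding hypC_def g_def by blast
      hence "\<i> * z = of_real (- Im z)" by (simp add: complex_eq_iff)
      with g0 have "H (cv ((- Im z) *\<^sub>R v - u)) = 0" by (simp add: g_def ys_def)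
      hence "h ((- Im z) *\<^sub>R v - u) = 0" by (simp add: H_cv del: cv_diff cv_scale)
      hence "- Im z > 0" by (rule hcone_swap[OF hu0 v])
      thus False using iz by simp
    qed
    show "(1::real) \<in> {0..1}" by simp
    show "Im z > 0" by (rule z)
  qed
  show ?thesis unfolding hcone_def
  proof (intro CollectI allI impI)
    fix t assume ht: "h (t *\<^sub>R v - y) = 0"
    show "t > 0"
    proof (rule ccontr)
      assume "\<not> t > 0"
      then consider "t = 0" | "t < 0" by linarith
      thus False
      proof cases
        case 1
        have "h (0 *\<^sub>R u - y) \<noteq> 0" using y unfolding hcone_def by force
        thus False using ht 1 by simp
      next
        case 2
        have "g 1 (- \<i> * of_real t) \<noteq> 0" by (rule main) (use 2 in simp)
        moreover have "g 1 (- \<i> * of_real t) = H (cv (t *\<^sub>R v - y))"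
          by (simp add: g_def ys_def algebra_simps)
        ultimately show False using ht by (simp add: H_cv del: cv_diff cv_scale)
      qed
    qed
  qed
qed

lemma hcone_scale:
  assumes "y \<in> hcone h u" "r > 0"
  shows "r *\<^sub>R y \<in> hcone h u"
  unfolding hcone_def
proof (intro CollectI allI impI)
  fix t assume ht: "h (t *\<^sub>R u - r *\<^sub>R y) = 0"
  have eq: "t *\<^sub>R u - r *\<^sub>R y = r *\<^sub>R ((t / r) *\<^sub>R u - y)" using assms(2) by (simp add: algebra_simps)
  have "h (t *\<^sub>R u - r *\<^sub>R y) = r ^ d * h ((t / r) *\<^sub>R u - y)" unfolding eq by (rule h_hom)
  hence "h ((t / r) *\<^sub>R u - y) = 0" using ht assms(2) by simp
  hence "t / r > 0" using assms(1) unfolding hcone_def by blast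
  thus "t > 0" using assms(2) by (simp add: zero_less_divide_iff)
qed

lemma hcone_add:
  assumes he: "hypC e" and a: "a \<in> hcone h e" and b: "b \<in> hcone h e"
  shows "a + b \<in> hcone h e"
proof -
  have ha: "hypC a" by (rule garding[OF he a])
  have he0: "h e \<noteq> 0" by (rule hypC_nz[OF he])
  have ea: "e \<in> hcone h a" unfolding hcone_def using hcone_swap[OF he0 a] by blast
  have ba: "b \<in> hcone h a" by (rule cone_incl[OF he ha a b])
  have aba: "a + b \<in> hcone h a" unfolding hcone_def
  proof (intro CollectI allI impI)
    fix t assume "h (t *\<^sub>R a - (a + b)) = 0"
    hence "h ((t - 1) *\<^sub>R a - b) = 0" by (simp add: algebra_simps)
    hence "t - 1 > 0" using ba unfolding hcone_def by blast
    thus "t > 0" by simp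
  qed
  show ?thesis by (rule cone_incl[OF ha he ea aba])
qed

lemma stability:
  assumes he: "hypC e" and x: "x \<in> hcone h e" and a: "a \<in> hcone h e" and b: "b \<in> hcone h e"
    and s: "Im s > 0" and t: "Im t \<ge> 0" 
  shows "H (cv x + s *s cv a + t *s cv b) \<noteq> 0"
proof -
  define w where "w = Im s *\<^sub>R a + Im t *\<^sub>R b"
  have w: "w \<in> hcone h e"
  proof (cases "Im t = 0")
    case True thus ?thesis using hcone_scale[OF a s] by (simp add: w_def)
  next
    case False
    hence "Im t > 0" using t by simp
    thus ?thesis unfolding w_def using hcone_add[OF he hcone_scale[OF a s] hcone_scale[OF b]] by simp
  qed
  have eq: "cv x + s *s cv a + t *s cv b = cv (x + Re s *\<^sub>R a + Re t *\<^sub>R b) + \<i> *s cv w"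
    by (simp add: vec_eq_iff w_def complex_eq_iff)
  have nz: "H (cv (x + Re s *\<^sub>R a + Re t *\<^sub>R b) + \<i> *s cv w) \<noteq> 0"
  proof
    assume "H (cv (x + Re s *\<^sub>R a + Re t *\<^sub>R b) + \<i> *s cv w) = 0"
    hence "Im \<i> = 0" using garding[OF he w] unfolding hypC_def by blast
    thus False by simp
  qed
  show ?thesis unfolding eq by (rule nz)
qed

end


abbreviation mpo :: "real poly \<Rightarrow> complex poly" where "mpo \<equiv> map_poly of_real"

lemma mpo_mult: "mpo (p * q) = mpo p * mpo q"
  by (rule poly_eqI) (simp add: coeff_map_poly coeff_mult of_real_sum)

lemma mpo_add: "mpo (p + q) = mpo p + mpo q"
  by (rule poly_eqI) (simp add: coeff_map_poly)

lemma mpo_power: "mpo (p ^ n) = mpo p ^ n"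
  by (induction n) (simp_all add: mpo_mult)

lemma mpo_lin[simp]: "mpo [:a, b:] = [:of_real a, of_real b:]"
  by (simp add: map_poly_pCons)

lemma poly_mpo_real[simp]: "poly (mpo p) (of_real x) = of_real (poly p x)"
  by (rule poly_map_of_real)

lemma degree_mpo[simp]: "degree (mpo p) = degree p"
  by (simp add: degree_map_poly)

lemma mpo_eq_0_iff[simp]: "mpo p = 0 \<longleftrightarrow> p = 0"
  by (simp add: map_poly_eq_0_iff)

lemma Re_poly_real: "Re (poly q (of_real t)) = poly (map_poly Re q) t"
  by (induction q) (simp_all add: map_poly_pCons)

lemma real_poly_from_values:
  fixes q :: "complex poly"
  assumes "\<And>t::real. poly q (of_real t) \<in> \<real>"
  shows "q = mpo (map_poly Re q)"
proof (rule poly_eq_on_reals)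
  fix t :: real
  have "poly q (of_real t) = of_real (Re (poly q (of_real t)))"
    using assms[of t] by (simp add: complex_is_Real_iff complex_eq_iff)
  thus "poly q (of_real t) = poly (mpo (map_poly Re q)) (of_real t)"
    by (simp add: Re_poly_real)
qed

lemma logderiv_prod:
  fixes M :: "complex multiset"
  assumes "\<And>x. x \<in># M \<Longrightarrow> Im x \<le> 0 \<and> x \<noteq> 0"
  shows "coeff (\<Prod>x\<in>#M. [:-x, 1:]) 0 \<noteq> 0 \<and>
         Im (coeff (\<Prod>x\<in>#M. [:-x, 1:]) 1 / coeff (\<Prod>x\<in>#M. [:-x, 1:]) 0) \<le> 0"
  using assms
proof (induction M)
  case empty
  show ?case by simp
next
  case (add x M)
  define P where "P = (\<Prod>x\<in>#M. [:-x, 1:])"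
  have IH: "coeff P 0 \<noteq> 0" "Im (coeff P 1 / coeff P 0) \<le> 0"
    using add by (auto simp: P_def)
  have x: "Im x \<le> 0" "x \<noteq> 0" using add.prems by auto
  have c0: "coeff ([:-x, 1:] * P) 0 = - x * coeff P 0" by (simp add: mult_pCons_left)
  have c1: "coeff ([:-x, 1:] * P) 1 = coeff P 0 - x * coeff P 1"
    by (simp add: mult_pCons_left coeff_pCons split: nat.split)
  have "coeff P 0 - x * coeff P 1 = (- x * coeff P 0) * (- inverse x + coeff P 1 / coeff P 0)"
    using IH(1) x(2) by (simp add: field_simps)
  hence ratio: "coeff ([:-x, 1:] * P) 1 / coeff ([:-x, 1:] * P) 0 = - inverse x + coeff P 1 / coeff P 0"
    using IH(1) x(2) unfolding c0 c1 by (simp add: field_simps)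
  have "Im (- inverse x) \<le> 0" using x(1) by (simp add: Im_divide divide_nonpos_nonneg)
  hence "Im (- inverse x + coeff P 1 / coeff P 0) \<le> 0" using IH(2) by simp
  thus ?case using ratio c0 IH(1) x(2) by (simp add: P_def)
qed

lemma logderiv_pick:
  fixes Q :: "complex poly"
  assumes Q0: "poly Q 0 \<noteq> 0" and roots: "\<And>x. poly Q x = 0 \<Longrightarrow> Im x \<le> 0"
  shows "Im (coeff Q 1 / coeff Q 0) \<le> 0"
proof -
  have Qn: "Q \<noteq> 0" using Q0 by auto
  define M where "M = proots Q"
  have M: "\<And>x. x \<in># M \<Longrightarrow> Im x \<le> 0 \<and> x \<noteq> 0"
    using roots Q0 Qn by (auto simp: M_def)
  have Qe: "Q = smult (lead_coeff Q) (\<Prod>x\<in>#M. [:-x, 1:])"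
    unfolding M_def by (rule complex_poly_decompose_multiset[symmetric])
  have lc: "lead_coeff Q \<noteq> 0" using Qn by simp
  have "coeff Q 1 / coeff Q 0 = coeff (\<Prod>x\<in>#M. [:-x, 1:]) 1 / coeff (\<Prod>x\<in>#M. [:-x, 1:]) 0"
    using lc by (subst (1 2) Qe) simp
  thus ?thesis using logderiv_prod[OF M] by simp
qed

lemma real_root_exists:
  fixes B :: "real poly"
  assumes "degree B > 0" and rr: "\<And>z. poly (mpo B) z = 0 \<Longrightarrow> Im z = 0"
  obtains p where "poly B p = 0"
proof -
  have "\<not> constant (poly (mpo B))" using assms(1) by (simp add: constant_degree)
  then obtain z where z: "poly (mpo B) z = 0" using fundamental_theorem_of_algebra by blast
  hence "z = of_real (Re z)" using rr[OF z] by (simp add: complex_eq_iff)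
  with z have "poly (mpo B) (of_real (Re z)) = 0" by simp
  hence "poly B (Re z) = 0" by simp
  thus ?thesis by (rule that)
qed

lemma roots_factor:
  fixes B1 B2 :: "real poly"
  assumes "\<And>z. poly (mpo (B1 * B2)) z = 0 \<Longrightarrow> P z"
  shows "\<And>z. poly (mpo B2) z = 0 \<Longrightarrow> P z"
  using assms by (simp add: mpo_mult)

lemma real_split:
  fixes B :: "real poly"
  assumes "B \<noteq> 0" and rr: "\<And>z. poly (mpo B) z = 0 \<Longrightarrow> Im z = 0"
  shows "\<exists>M. B = smult (lead_coeff B) (\<Prod>p\<in>#M. [:-p, 1:]) \<and> (\<forall>p\<in>#M. poly B p = 0)"
  using assms
proof (induction "degree B" arbitrary: B rule: less_induct)
  case less
  show ?case
  proof (cases "degree B = 0")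
    case True
    then obtain a where "B = [:a:]" using degree_eq_zeroE by blast
    thus ?thesis by (intro exI[of _ "{#}"]) simp
  next
    case False
    then obtain p where p: "poly B p = 0" using real_root_exists less.prems by blast
    then obtain B1 where B1: "B = [:-p, 1:] * B1" using poly_eq_0_iff_dvd by (metis dvdE)
    have B10: "B1 \<noteq> 0" using less.prems(1) B1 by auto
    have dB: "degree B = Suc (degree B1)" using B10 by (subst B1, subst degree_mult_eq) auto
    have rr1: "\<And>z. poly (mpo B1) z = 0 \<Longrightarrow> Im z = 0"
      using roots_factor[of "[:-p,1:]" B1 "\<lambda>z. Im z = 0"] less.prems(2) B1 by blast
    obtain M1 where M1: "B1 = smult (lead_coeff B1) (\<Prod>p\<in>#M1. [:-p, 1:])" "\<forall>q\<in>#M1. poly B1 q = 0"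
      using less.hyps[of B1] dB B10 rr1 by auto
    have "lead_coeff ([:-p,1:] * B1) = lead_coeff B1" by (simp only: lead_coeff_mult) simp
    hence lc: "lead_coeff B = lead_coeff B1" unfolding B1[symmetric] .
    show ?thesis
    proof (intro exI[of _ "add_mset p M1"] conjI)
      have "smult (lead_coeff B) (\<Prod>p\<in>#add_mset p M1. [:-p, 1:])
            = [:-p, 1:] * smult (lead_coeff B1) (\<Prod>p\<in>#M1. [:-p, 1:])"
        by (simp only: lc image_mset_add_mset prod_mset.add_mset mult_smult_right)
      also have "\<dots> = B" using B1 M1(1) by simp
      finally show "B = smult (lead_coeff B) (\<Prod>p\<in>#add_mset p M1. [:-p, 1:])" by simp
      show "\<forall>q\<in>#add_mset p M1. poly B q = 0"
      proof
        fix q assume "q \<in># add_mset p M1"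
        hence "q = p \<or> q \<in># M1" by simp
        thus "poly B q = 0"
        proof
          assume "q \<in># M1"
          hence "poly B1 q = 0" using M1(2) by blast
          thus ?thesis by (simp only: B1 poly_mult mult_zero_right)
        qed (use p in simp)
      qed
    qed
  qed
qed

lemma logderiv_real_prod:
  fixes M :: "real multiset"
  assumes "\<And>p. p \<in># M \<Longrightarrow> p \<noteq> t"
  shows "poly (\<Prod>p\<in>#M. [:-p, 1:]) t \<noteq> 0 \<and>
    poly (pderiv (\<Prod>p\<in>#M. [:-p, 1:])) t / poly (\<Prod>p\<in>#M. [:-p, 1:]) t = (\<Sum>p\<in>#M. 1 / (t - p))"
  using assms
proof (induction M)
  case empty thus ?case by simp
next
  case (add x M)
  define P where "P = (\<Prod>p\<in>#M. [:-p, 1:])"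
  have IH: "poly P t \<noteq> 0" "poly (pderiv P) t / poly P t = (\<Sum>p\<in>#M. 1 / (t - p))"
    using add by (auto simp: P_def)
  have xt: "t - x \<noteq> 0" using add.prems by auto
  have pd1: "pderiv [:-x,1:] = 1" by (simp add: pderiv_pCons)
  have "poly (pderiv ([:-x,1:] * P)) t = poly P t + (t - x) * poly (pderiv P) t"
    by (simp only: pderiv_mult poly_add poly_mult pd1 poly_1) (simp add: algebra_simps)
  hence "poly (pderiv ([:-x,1:] * P)) t / poly ([:-x,1:] * P) t = 1 / (t - x) + poly (pderiv P) t / poly P t"
    using IH(1) xt by (simp add: field_simps)
  thus ?case using IH xt by (simp add: P_def)
qed


lemma local_limit:
  fixes A C :: "real poly" and p :: real and m :: nat and \<omega> :: complex
  assumes Cp: "poly C p \<noteq> 0" and \<omega>: "Im \<omega> > 0"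
    and pick: "\<And>z. Im z > 0 \<Longrightarrow> Im (poly (mpo A) z / poly (mpo ([:-p,1:]^m * C)) z) \<le> 0"
  shows "Im (of_real (poly A p / poly C p) / \<omega> ^ m) \<le> 0"
proof -
  have w0: "\<omega> \<noteq> 0" using \<omega> by auto
  define \<phi> where "\<phi> = (\<lambda>\<epsilon>::real. poly (mpo A) (of_real p + of_real \<epsilon> * \<omega>) /
                                  (\<omega> ^ m * poly (mpo C) (of_real p + of_real \<epsilon> * \<omega>)))"
  have lim: "(\<phi> \<longlongrightarrow> \<phi> 0) (at_right 0)"
    unfolding \<phi>_def
    by (intro tendsto_intros) (auto simp: w0 Cp)
  have phi0: "\<phi> 0 = of_real (poly A p / poly C p) / \<omega> ^ m"
    by (simp add: \<phi>_def)
  have ev: "\<forall>\<^sub>F \<epsilon> in at_right 0. Im (\<phi> \<epsilon>) \<le> 0"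
  proof (rule eventually_at_rightI[of 0 1])
    fix \<epsilon> :: real assume "\<epsilon> \<in> {0<..<1}"
    hence e: "0 < \<epsilon>" by simp
    define z where "z = of_real p + of_real \<epsilon> * \<omega>"
    have iz: "Im z > 0" using e \<omega> by (simp add: z_def)
    have Bz: "poly (mpo ([:-p,1:]^m * C)) z = (of_real \<epsilon> * \<omega>) ^ m * poly (mpo C) z"
      by (simp add: mpo_mult mpo_power z_def)
    have "\<phi> \<epsilon> = of_real (\<epsilon> ^ m) * (poly (mpo A) z / poly (mpo ([:-p,1:]^m * C)) z)"
      unfolding Bz \<phi>_def z_def[symmetric] using e w0
      by (cases "poly (mpo C) z = 0") (simp_all add: field_simps power_mult_distrib)
    moreover have "Im (of_real (\<epsilon> ^ m) * w) = \<epsilon> ^ m * Im w" for w :: complex by simp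
    ultimately have "Im (\<phi> \<epsilon>) = \<epsilon> ^ m * Im (poly (mpo A) z / poly (mpo ([:-p,1:]^m * C)) z)"
      by metis
    also have "\<dots> \<le> 0" using pick[OF iz] e by (simp add: mult_nonneg_nonpos)
    finally show "Im (\<phi> \<epsilon>) \<le> 0" .
  qed simp
  have "Im (\<phi> 0) \<le> 0"
    by (rule tendsto_upperbound[OF tendsto_Im[OF lim] ev trivial_limit_at_right_real])
  thus ?thesis by (simp add: phi0)
qed

lemma local_pole:
  fixes A C :: "real poly" and p :: real and m :: nat
  assumes m1: "m \<ge> 1" and Cp: "poly C p \<noteq> 0" and Ap: "poly A p \<noteq> 0"
    and pick: "\<And>z. Im z > 0 \<Longrightarrow> Im (poly (mpo A) z / poly (mpo ([:-p,1:]^m * C)) z) \<le> 0"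
  shows "m = 1 \<and> poly A p / poly C p \<ge> 0"
proof -
  define K where "K = poly A p / poly C p"
  have K0: "K \<noteq> 0" using Ap Cp by (simp add: K_def)
  have L: "\<And>\<omega>. Im \<omega> > 0 \<Longrightarrow> Im (of_real K / \<omega> ^ m) \<le> 0"
    unfolding K_def by (rule local_limit[OF Cp _ pick])
  show ?thesis
  proof (cases "m = 1")
    case True
    have "Im (of_real K / \<i> ^ m) \<le> 0" by (rule L) simp
    thus ?thesis using True by (simp add: K_def)
  next
    case False
    hence m2: "m \<ge> 2" using m1 by simp
    have mpos: "real m > 0" using m2 by simp
    define \<omega>1 where "\<omega>1 = cis (pi / (2 * real m))"
    define \<omega>2 where "\<omega>2 = cis (3 / 2 * pi / real m)"
    have "Im \<omega>1 > 0" unfolding \<omega>1_def using m2 mpos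
      by (simp, intro sin_gt_zero) (auto simp: field_simps)
    hence "Im (of_real K / \<omega>1 ^ m) \<le> 0" by (rule L)
    moreover have "\<omega>1 ^ m = \<i>"
    proof -
      have "real m * (pi / (2 * real m)) = pi / 2" using mpos by simp
      thus ?thesis unfolding \<omega>1_def Complex.DeMoivre by (simp only: cis_pi_half)
    qed
    ultimately have k1: "- K \<le> 0" by simp
    have "3 / 2 * pi / real m < pi"
      using m2 pi_gt_zero by (simp add: field_simps)
    hence "Im \<omega>2 > 0" unfolding \<omega>2_def using mpos
      by (simp, intro sin_gt_zero) (auto simp: field_simps)
    hence "Im (of_real K / \<omega>2 ^ m) \<le> 0" by (rule L)
    moreover have "\<omega>2 ^ m = - \<i>"
    proof -
      have "real m * (3 / 2 * pi / real m) = 3 / 2 * pi" using mpos by simp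
      hence "\<omega>2 ^ m = cis (3 / 2 * pi)" unfolding \<omega>2_def Complex.DeMoivre by (simp only:)
      also have "\<dots> = - \<i>" using sin_3over2_pi cos_3over2_pi by (simp add: complex_eq_iff)
      finally show ?thesis .
    qed
    ultimately have k2: "K \<le> 0" by simp
    from k1 k2 K0 show ?thesis by simp
  qed
qed

lemma split_simple:
  fixes B :: "real poly"
  assumes "B \<noteq> 0" and rr: "\<And>z. poly (mpo B) z = 0 \<Longrightarrow> Im z = 0"
    and simple: "\<And>p. poly B p = 0 \<Longrightarrow> order p B = 1"
  shows "B = smult (lead_coeff B) (\<Prod>p\<in>{p. poly B p = 0}. [:-p, 1:])"
  using assms
proof (induction "degree B" arbitrary: B rule: less_induct)
  case less
  show ?case
  proof (cases "degree B = 0")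
    case True
    then obtain a where "B = [:a:]" using degree_eq_zeroE by blast
    thus ?thesis using less.prems(1) by simp
  next
    case False
    then obtain p where p: "poly B p = 0" using real_root_exists less.prems by blast
    then obtain B1 where B1: "B = [:-p, 1:] * B1" using poly_eq_0_iff_dvd by (metis dvdE)
    have B10: "B1 \<noteq> 0" using less.prems(1) B1 by auto
    have dB: "degree B = Suc (degree B1)" using B10 by (subst B1, subst degree_mult_eq) auto
    have rr1: "\<And>z. poly (mpo B1) z = 0 \<Longrightarrow> Im z = 0"
      using roots_factor[of "[:-p,1:]" B1 "\<lambda>z. Im z = 0"] less.prems(2) B1 by blast
    have ordB: "order q B = order q [:-p,1:] + order q B1" for q
      using less.prems(1) unfolding B1 by (intro order_mult) (use B1 in simp)
    have "order p [:-p,1:] = 1" using order_power_n_n[of p 1] by (simp only: power_one_right)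
    hence "order p B1 = 0" using less.prems(3)[OF p] ordB[of p] by simp
    hence pB1: "poly B1 p \<noteq> 0" using B10 order_root by blast
    have simple1: "order q B1 = 1" if "poly B1 q = 0" for q
    proof -
      have "poly B q = 0" using that by (simp add: B1)
      hence "order q B = 1" by (rule less.prems(3))
      moreover have "order q B1 \<noteq> 0" using that B10 order_root by blast
      ultimately show ?thesis using ordB[of q] by simp
    qed
    have IH: "B1 = smult (lead_coeff B1) (\<Prod>p\<in>{p. poly B1 p = 0}. [:-p, 1:])"
      using less.hyps[of B1] dB B10 rr1 simple1 by auto
    have "lead_coeff ([:-p,1:] * B1) = lead_coeff B1" by (simp only: lead_coeff_mult) simp
    hence lc: "lead_coeff B = lead_coeff B1" unfolding B1[symmetric] .
    have roots: "{q. poly B q = 0} = insert p {q. poly B1 q = 0}"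
      by (auto simp: B1)
    have fin: "finite {q. poly B1 q = 0}" using B10 by (rule poly_roots_finite)
    have "smult (lead_coeff B) (\<Prod>p\<in>{p. poly B p = 0}. [:-p, 1:])
          = [:-p, 1:] * smult (lead_coeff B1) (\<Prod>p\<in>{p. poly B1 p = 0}. [:-p, 1:])"
      unfolding roots lc using fin pB1 by (simp add: prod.insert)
    also have "\<dots> = B" unfolding IH[symmetric] B1 ..
    finally show ?thesis by simp
  qed
qed


lemma pick_pf:
  fixes A B :: "real poly"
  assumes B0: "B \<noteq> 0" and deg: "A \<noteq> 0 \<Longrightarrow> degree A < degree B"
    and rootsB: "\<And>z. poly (mpo B) z = 0 \<Longrightarrow> Im z = 0 \<and> Re z < 0"
    and pick: "\<And>z. Im z > 0 \<Longrightarrow> Im (poly (mpo A) z / poly (mpo B) z) \<le> 0"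
  shows "\<exists>P r. finite P \<and> (\<forall>p\<in>P. p < 0 \<and> r p \<ge> 0) \<and>
           (\<forall>t. poly B t \<noteq> 0 \<longrightarrow> poly A t / poly B t = (\<Sum>p\<in>P. r p / (t - p)))"
proof (cases "A = 0")
  case True thus ?thesis by (intro exI[of _ "{}"]) simp
next
  case A0: False
  define g where "g = gcd A B"
  define A1 where "A1 = A div g"
  define B1 where "B1 = B div g"
  have g0: "g \<noteq> 0" using B0 by (simp add: g_def)
  have Ae: "A = A1 * g" unfolding A1_def g_def by simp
  have Be: "B = B1 * g" unfolding B1_def g_def by simp
  have cop: "coprime A1 B1" unfolding A1_def B1_def g_def by (rule div_gcd_coprime) (use B0 in auto)
  have A10: "A1 \<noteq> 0" using A0 Ae by auto
  have B10: "B1 \<noteq> 0" using B0 Be by auto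
  have degA1B1: "degree A1 < degree B1"
    using deg[OF A0] A10 B10 g0 unfolding Ae Be by (simp add: degree_mult_eq)
  have rB1: "Im z = 0 \<and> Re z < 0" if "poly (mpo B1) z = 0" for z
    using rootsB[of z] that unfolding Be by (simp add: mpo_mult)
  have pick1: "Im (poly (mpo A1) z / poly (mpo B1) z) \<le> 0" if iz: "Im z > 0" for z
  proof -
    have "poly (mpo g) z \<noteq> 0"
    proof
      assume "poly (mpo g) z = 0"
      hence "poly (mpo B) z = 0" unfolding Be by (simp add: mpo_mult)
      thus False using rootsB iz by force
    qed
    hence "poly (mpo A) z / poly (mpo B) z = poly (mpo A1) z / poly (mpo B1) z"
      unfolding Ae Be by (simp add: mpo_mult)
    thus ?thesis using pick[OF iz] by simp
  qed
  define P where "P = {p. poly B1 p = 0}"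
  have finP: "finite P" unfolding P_def using B10 by (rule poly_roots_finite)
  have Pneg: "p < 0" if "p \<in> P" for p
    using rB1[of "of_real p"] that by (simp add: P_def)
  have A1P: "poly A1 p \<noteq> 0" if "p \<in> P" for p
  proof
    assume "poly A1 p = 0"
    hence "[:-p,1:] dvd A1" "[:-p,1:] dvd B1" using that by (simp_all add: P_def poly_eq_0_iff_dvd)
    hence "is_unit [:-p,1:]" using cop coprime_common_divisor by blast
    thus False by (simp add: is_unit_iff_degree)
  qed
  have simple: "order p B1 = 1" if pP: "p \<in> P" for p
  proof -
    obtain C where C: "B1 = [:-p,1:] ^ order p B1 * C" "\<not> [:-p,1:] dvd C"
      using order_decomp[OF B10] by blast
    have Cp: "poly C p \<noteq> 0" using C(2) by (simp add: poly_eq_0_iff_dvd)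
    have "order p B1 \<noteq> 0" using pP B10 order_root unfolding P_def by blast
    hence m1: "order p B1 \<ge> 1" by simp
    have "order p B1 = 1 \<and> poly A1 p / poly C p \<ge> 0"
      by (rule local_pole[OF m1 Cp A1P[OF pP]]) (use pick1 C(1) in metis)
    thus ?thesis by simp
  qed
  have B1e: "B1 = smult (lead_coeff B1) (\<Prod>p\<in>P. [:-p, 1:])"
    unfolding P_def by (rule split_simple[OF B10]) (use rB1 simple P_def in auto)
  define c where "c = lead_coeff B1"
  have c0: "c \<noteq> 0" using B10 by (simp add: c_def)
  define Cp where "Cp = (\<lambda>p. smult c (\<Prod>q\<in>P-{p}. [:-q, 1:]))"
  have B1Cp: "B1 = [:-p,1:] * Cp p" if "p \<in> P" for p
  proof -
    have "(\<Prod>q\<in>P. [:-q, 1:]) = [:-p,1:] * (\<Prod>q\<in>P-{p}. [:-q, 1:])"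
      using finP that by (rule prod.remove)
    thus ?thesis unfolding Cp_def c_def by (subst B1e) (simp add: mult_smult_right)
  qed
  have Cpp: "poly (Cp p) p \<noteq> 0" if "p \<in> P" for p
    using c0 finP by (simp add: Cp_def poly_prod)
  have Cpq: "poly (Cp p) q = 0" if "p \<in> P" "q \<in> P" "q \<noteq> p" for p q
  proof -
    have "(\<Prod>q'\<in>P-{p}. [:-q', 1:]) = [:-q,1:] * (\<Prod>q'\<in>P-{p}-{q}. [:-q', 1:])"
      using finP that by (intro prod.remove) auto
    thus ?thesis by (simp add: Cp_def)
  qed
  define r where "r = (\<lambda>p. poly A1 p / poly (Cp p) p)"
  have rpos: "r p \<ge> 0" if pP: "p \<in> P" for p
  proof -
    have "(1::nat) = 1 \<and> poly A1 p / poly (Cp p) p \<ge> 0"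
      by (rule local_pole[OF _ Cpp[OF pP] A1P[OF pP]]) (use pick1 B1Cp[OF pP] in auto)
    thus ?thesis by (simp add: r_def)
  qed
  define L where "L = (\<Sum>p\<in>P. smult (r p) (Cp p))"
  have LP: "poly L p = poly A1 p" if pP: "p \<in> P" for p
  proof -
    have "poly L p = r p * poly (Cp p) p + (\<Sum>q\<in>P-{p}. r q * poly (Cp q) p)"
      unfolding L_def poly_sum poly_smult using finP pP by (rule sum.remove)
    also have "(\<Sum>q\<in>P-{p}. r q * poly (Cp q) p) = 0"
      by (intro sum.neutral) (use Cpq pP in auto)
    finally show ?thesis using Cpp[OF pP] by (simp add: r_def)
  qed
  have cardP: "card P \<ge> degree B1"
  proof -
    have "degree B1 = degree (\<Prod>p\<in>P. [:-p, 1:])" using c0 B1e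
      by (metis c_def degree_smult_eq)
    also have "\<dots> \<le> (\<Sum>p\<in>P. degree [:-p, 1:])" using degree_prod_sum_le[OF finP, of "\<lambda>p. [:-p,1:]"] by (simp add: o_def)
    also have "\<dots> = card P" by simp
    finally show ?thesis .
  qed
  have degL: "degree L < card P"
  proof -
    have P1: "card P \<ge> 1" using degA1B1 cardP by linarith
    have "degree (Cp p) \<le> card P - 1" if "p \<in> P" for p
    proof -
      have "degree (Cp p) \<le> degree (\<Prod>q\<in>P-{p}. [:-q, 1:])" by (simp add: Cp_def)
      also have "\<dots> \<le> (\<Sum>q\<in>P-{p}. degree [:-q, 1:])"
        using degree_prod_sum_le[of "P-{p}" "\<lambda>q. [:-q,1:]"] finP by (simp add: o_def)
      also have "\<dots> = card (P - {p})" by simp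
      also have "\<dots> = card P - 1" using that finP by simp
      finally show ?thesis .
    qed
    hence "degree L \<le> card P - 1"
      unfolding L_def by (intro degree_sum_le finP) (auto intro: order.trans[OF degree_smult_le])
    thus ?thesis using P1 by linarith
  qed
  have A1L: "A1 = L"
  proof (rule ccontr)
    assume ne: "A1 \<noteq> L"
    hence D0: "A1 - L \<noteq> 0" by simp
    have "P \<subseteq> {x. poly (A1 - L) x = 0}" using LP by auto
    hence "card P \<le> card {x. poly (A1 - L) x = 0}"
      by (intro card_mono poly_roots_finite D0)
    also have "\<dots> \<le> degree (A1 - L)" by (rule card_poly_roots_bound[OF D0])
    also have "\<dots> \<le> max (degree A1) (degree L)" by (rule degree_diff_le_max)
    finally show False using degL degA1B1 cardP by linarith
  qed
  show ?thesis
  proof (intro exI[of _ P] exI[of _ r] conjI ballI allI impI)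
    show "finite P" by (rule finP)
    show "p < 0" if "p \<in> P" for p using Pneg that .
    show "r p \<ge> 0" if "p \<in> P" for p using rpos that .
    fix t assume Bt: "poly B t \<noteq> 0"
    have B1t: "poly B1 t \<noteq> 0" and gt: "poly g t \<noteq> 0" using Bt unfolding Be by auto
    have "poly A t / poly B t = poly A1 t / poly B1 t"
      unfolding Ae Be using gt by simp
    also have "\<dots> = (\<Sum>p\<in>P. r p * poly (Cp p) t) / poly B1 t"
      unfolding A1L L_def by (simp add: poly_sum)
    also have "\<dots> = (\<Sum>p\<in>P. r p * poly (Cp p) t / poly B1 t)"
      by (simp add: sum_divide_distrib)
    also have "\<dots> = (\<Sum>p\<in>P. r p / (t - p))"
    proof (intro sum.cong refl)
      fix p assume pP: "p \<in> P"
      have eq: "poly B1 t = (t - p) * poly (Cp p) t" by (subst B1Cp[OF pP]) (simp add: algebra_simps)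
      hence "poly (Cp p) t \<noteq> 0" "t - p \<noteq> 0" using B1t by auto
      thus "r p * poly (Cp p) t / poly B1 t = r p / (t - p)" unfolding eq by simp
    qed
    finally show "poly A t / poly B t = (\<Sum>p\<in>P. r p / (t - p))" .
  qed
qed


lemma final_ineq:
  fixes A B :: "real poly" and \<delta> c :: real and P :: "real set" and r :: "real \<Rightarrow> real" and M :: "real multiset"
  assumes d1: "\<delta> > 1"
    and Be: "B = smult c (\<Prod>p\<in>#M. [:-p, 1:])" and c0: "c \<noteq> 0" and Mneg: "\<And>p. p \<in># M \<Longrightarrow> p < 0"
    and finP: "finite P" and Pr: "\<And>p. p \<in> P \<Longrightarrow> p < 0 \<and> r p \<ge> 0"
    and F: "\<And>t. poly B t \<noteq> 0 \<Longrightarrow> poly A t / poly B t = (\<Sum>p\<in>P. r p / (t - p))"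
    and hyp: "poly B 0 / poly (pderiv B) 0 \<ge> \<delta> / (\<delta> - 1)"
  shows "(poly B \<delta> - poly (pderiv B) \<delta>) / (poly A \<delta> - poly (pderiv A) \<delta>) \<ge> poly B 0 / poly A 0"
proof -
  define Pm where "Pm = (\<Prod>p\<in>#M. [:-p, 1:])"
  have LDt: "poly Pm t \<noteq> 0 \<and> poly (pderiv Pm) t / poly Pm t = (\<Sum>p\<in>#M. 1 / (t - p))" if "t \<ge> 0" for t
    unfolding Pm_def by (rule logderiv_real_prod) (use Mneg that in force)
  have Bnz: "poly B t \<noteq> 0" if "t \<ge> 0" for t using LDt[OF that] c0 by (simp add: Be Pm_def[symmetric])
  have G: "poly (pderiv B) t / poly B t = (\<Sum>p\<in>#M. 1 / (t - p))" if "t \<ge> 0" for t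
    using LDt[OF that] c0 by (simp add: Be Pm_def[symmetric] pderiv_smult)
  define G0 where "G0 = (\<Sum>p\<in>#M. 1 / (0 - p))"
  define Gd where "Gd = (\<Sum>p\<in>#M. 1 / (\<delta> - p))"
  have mono1: "1 / (\<delta> - p) \<le> 1 / (0 - p)" if "p < 0" for p
    using that d1 by (intro divide_left_mono) (auto simp: mult_pos_neg)
  have Gd_le: "Gd \<le> G0" unfolding Gd_def G0_def
    by (rule sum_mset_mono) (use Mneg mono1 in blast)
  have "(\<Sum>p\<in>#M. (0::real)) \<le> Gd" unfolding Gd_def
    by (rule sum_mset_mono) (use Mneg d1 in force)
  hence Gd_ge: "Gd \<ge> 0" by simp
  have B00: "poly B 0 \<noteq> 0" using Bnz by simp
  have Bd0: "poly B \<delta> \<noteq> 0" using Bnz d1 by simp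
  have dpos: "\<delta> / (\<delta> - 1) > 0" using d1 by simp
  have B'0: "poly (pderiv B) 0 \<noteq> 0" using hyp dpos by auto
  have g0e: "poly (pderiv B) 0 / poly B 0 = G0" using G[of 0] by (simp add: G0_def)
  have "poly B 0 / poly (pderiv B) 0 = 1 / G0" unfolding g0e[symmetric] by simp
  hence G0le: "1 / G0 \<ge> \<delta> / (\<delta> - 1)" using hyp by simp
  hence G0pos: "G0 > 0" using dpos by (metis less_le_trans zero_less_divide_1_iff)
  have "1 / (1 / G0) \<le> 1 / (\<delta> / (\<delta> - 1))"
    by (rule divide_left_mono[OF G0le]) (use dpos G0pos d1 in \<open>auto intro: mult_pos_pos\<close>)
  hence "G0 \<le> (\<delta> - 1) / \<delta>" by simp
  moreover have "1 - (\<delta> - 1) / \<delta> = 1 / \<delta>" using d1 by (simp add: diff_divide_distrib)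
  ultimately have oneG: "1 - Gd \<ge> 1 / \<delta>" using Gd_le by linarith
  have Gdeq: "poly (pderiv B) \<delta> = Gd * poly B \<delta>" using G[of \<delta>] d1 Bd0 by (simp add: Gd_def field_simps)
  define Fv where "Fv = (\<lambda>t. \<Sum>p\<in>P. r p / (t - p))"
  define S1 where "S1 = (\<Sum>p\<in>P. r p / (\<delta> - p)^2)"
  have AF: "poly A t = Fv t * poly B t" if "t \<ge> 0" for t
    using F[OF Bnz[OF that]] Bnz[OF that] by (simp add: Fv_def field_simps)
  have dFv: "(Fv has_field_derivative - S1) (at \<delta>)"
  proof -
    have "((\<lambda>t. \<Sum>p\<in>P. r p / (t - p)) has_field_derivative (\<Sum>p\<in>P. - (r p / (\<delta> - p)^2))) (at \<delta>)"
    proof (rule DERIV_sum)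
      fix p assume "p \<in> P"
      hence "\<delta> - p \<noteq> 0" using Pr d1 by force
      thus "((\<lambda>t. r p / (t - p)) has_field_derivative - (r p / (\<delta> - p)^2)) (at \<delta>)"
        by (auto intro!: derivative_eq_intros simp: power2_eq_square field_simps)
    qed
    thus ?thesis by (simp add: Fv_def S1_def sum_negf)
  qed
  have dA: "((\<lambda>t. Fv t * poly B t) has_field_derivative (- S1 * poly B \<delta> + Fv \<delta> * poly (pderiv B) \<delta>)) (at \<delta>)"
    by (rule derivative_eq_intros dFv poly_DERIV refl)+ simp
  have dA2: "(poly A has_field_derivative (- S1 * poly B \<delta> + Fv \<delta> * poly (pderiv B) \<delta>)) (at \<delta>)"
    by (rule has_field_derivative_transform_within_open[OF dA, of "{0<..}"]) (use d1 AF in auto)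
  have A'd: "poly (pderiv A) \<delta> = - S1 * poly B \<delta> + Fv \<delta> * poly (pderiv B) \<delta>"
    using DERIV_unique[OF poly_DERIV dA2] .
  define F0 where "F0 = Fv 0"
  define Fd where "Fd = Fv \<delta>"
  have hp: "0 \<le> r p / (t - p)" if "p \<in> P" "t \<ge> 0" for p t
  proof -
    have "p < 0" "r p \<ge> 0" using Pr[OF that(1)] by auto
    thus ?thesis using that(2) by (intro divide_nonneg_pos) auto
  qed
  have F0ge: "F0 \<ge> 0" unfolding F0_def Fv_def
    by (rule sum_nonneg) (use hp[of _ 0] in simp)
  have Fdge: "Fd \<ge> 0" unfolding Fd_def Fv_def
    by (rule sum_nonneg) (use hp[of _ \<delta>] d1 in simp)
  have S1ge: "S1 \<ge> 0" unfolding S1_def by (rule sum_nonneg) (use Pr in auto)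
  have key: "F0 - Fd \<ge> \<delta> * S1"
  proof -
    have "F0 - Fd = (\<Sum>p\<in>P. r p / (0 - p) - r p / (\<delta> - p))"
      by (simp add: F0_def Fd_def Fv_def sum_subtractf)
    also have "\<dots> \<ge> (\<Sum>p\<in>P. \<delta> * (r p / (\<delta> - p)^2))"
    proof (rule sum_mono)
      fix p assume pP: "p \<in> P"
      have p0: "p < 0" and rp: "r p \<ge> 0" using Pr[OF pP] by auto
      have eq: "r p / (0 - p) - r p / (\<delta> - p) = \<delta> * r p / ((- p) * (\<delta> - p))"
        using p0 d1 by (simp add: field_simps)
      have "(- p) * (\<delta> - p) \<le> (\<delta> - p) * (\<delta> - p)" using p0 d1 by (intro mult_right_mono) auto
      hence "(- p) * (\<delta> - p) \<le> (\<delta> - p)^2" by (simp only: power2_eq_square)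
      moreover have "(- p) * (\<delta> - p) > 0" using p0 d1 by (intro mult_pos_pos) auto
      moreover have "0 < (\<delta> - p)^2 * ((- p) * (\<delta> - p))"
        using p0 d1 by (intro mult_pos_pos) auto
      moreover have "0 \<le> \<delta> * r p" using rp d1 by simp
      ultimately have "\<delta> * r p / (\<delta> - p)^2 \<le> \<delta> * r p / ((- p) * (\<delta> - p))"
        by (intro divide_left_mono) auto
      thus "\<delta> * (r p / (\<delta> - p)^2) \<le> r p / (0 - p) - r p / (\<delta> - p)" unfolding eq by simp
    qed
    also have "(\<Sum>p\<in>P. \<delta> * (r p / (\<delta> - p)^2)) = \<delta> * S1" by (simp add: S1_def sum_distrib_left)
    finally show ?thesis .
  qed
  have RHS: "poly B 0 / poly A 0 = (if F0 = 0 then 0 else 1 / F0)"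
    using AF[of 0] B00 by (simp add: F0_def)
  have LHS: "(poly B \<delta> - poly (pderiv B) \<delta>) / (poly A \<delta> - poly (pderiv A) \<delta>) = (1 - Gd) / (Fd * (1 - Gd) + S1)"
  proof -
    have "poly B \<delta> - poly (pderiv B) \<delta> = poly B \<delta> * (1 - Gd)" by (simp add: Gdeq algebra_simps)
    moreover have "poly A \<delta> - poly (pderiv A) \<delta> = poly B \<delta> * (Fd * (1 - Gd) + S1)"
      using AF[of \<delta>] d1 by (simp add: A'd Gdeq Fd_def algebra_simps)
    ultimately show ?thesis using Bd0 by simp
  qed
  have "1 / \<delta> > 0" using d1 by simp
  hence oneGpos: "1 - Gd > 0" using oneG by linarith
  show ?thesis
  proof (cases "F0 = 0")
    case True
    thus ?thesis unfolding RHS LHS using oneGpos Fdge S1ge by simp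
  next
    case False
    hence F0pos: "F0 > 0" using F0ge by simp
    have Dpos: "Fd * (1 - Gd) + S1 > 0"
    proof (rule ccontr)
      assume "\<not> ?thesis"
      moreover have "Fd * (1 - Gd) \<ge> 0" using Fdge oneGpos by simp
      ultimately have "S1 = 0" using S1ge by linarith
      have hq: "0 \<le> r p / (\<delta> - p)^2" if "p \<in> P" for p using Pr[OF that] by simp
      have z: "\<forall>p\<in>P. r p / (\<delta> - p)^2 = 0"
        using sum_nonneg_eq_0_iff[OF finP, of "\<lambda>p. r p / (\<delta> - p)^2"] hq \<open>S1 = 0\<close> unfolding S1_def by blast
      have "r p = 0" if pP: "p \<in> P" for p
      proof -
        have "\<delta> - p > 0" using Pr[OF pP] d1 by linarith
        hence "(\<delta> - p)^2 \<noteq> 0" by simp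
        thus ?thesis using z pP by auto
      qed
      hence "\<forall>p\<in>P. r p = 0" by blast
      hence "F0 = 0" by (simp add: F0_def Fv_def)
      thus False using False by simp
    qed
    have "0 \<le> \<delta> * S1" using S1ge d1 by simp
    hence FF: "0 \<le> F0 - Fd" using key by linarith
    have "(F0 - Fd) * (1 - Gd) \<ge> (\<delta> * S1) * (1 / \<delta>)"
      using key oneG FF oneGpos d1 by (intro mult_mono) auto
    hence "(F0 - Fd) * (1 - Gd) \<ge> S1" using d1 by simp
    hence "F0 * (1 - Gd) \<ge> Fd * (1 - Gd) + S1" by (simp add: algebra_simps)
    hence "(Fd * (1 - Gd) + S1) / F0 \<le> 1 - Gd"
      using F0pos by (simp add: pos_divide_le_eq mult.commute)
    hence "((Fd * (1 - Gd) + S1) / F0) / (Fd * (1 - Gd) + S1) \<le> (1 - Gd) / (Fd * (1 - Gd) + S1)"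
      using Dpos by (intro divide_right_mono) auto
    hence "1 / F0 \<le> (1 - Gd) / (Fd * (1 - Gd) + S1)" using Dpos by simp
    thus ?thesis unfolding RHS LHS using False by simp
  qed
qed


lemma coeff_mult_top:
  fixes p q :: "'a::comm_ring_1 poly"
  assumes "degree p \<le> n" "degree q \<le> m"
  shows "coeff (p * q) (n + m) = coeff p n * coeff q m"
proof -
  have "coeff (p * q) (n + m) = (\<Sum>i\<le>n + m. coeff p i * coeff q (n + m - i))"
    by (rule coeff_mult)
  also have "\<dots> = coeff p n * coeff q (n + m - n) + (\<Sum>i\<in>{..n+m}-{n}. coeff p i * coeff q (n + m - i))"
    by (rule sum.remove) auto
  also have "(\<Sum>i\<in>{..n+m}-{n}. coeff p i * coeff q (n + m - i)) = 0"
  proof (intro sum.neutral ballI)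
    fix i assume i: "i \<in> {..n+m}-{n}"
    show "coeff p i * coeff q (n + m - i) = 0"
    proof (cases "i < n")
      case True
      hence "n + m - i > m" using i by auto
      hence "coeff q (n + m - i) = 0" using assms(2) by (intro coeff_eq_0) auto
      thus ?thesis by simp
    next
      case False
      hence "i > n" using i by auto
      hence "coeff p i = 0" using assms(1) by (intro coeff_eq_0) auto
      thus ?thesis by simp
    qed
  qed
  finally show ?thesis by simp
qed

definition tdeg :: "nat \<Rightarrow> 'a::comm_ring_1 poly poly \<Rightarrow> bool" where
  "tdeg n R \<longleftrightarrow> (\<forall>k. coeff R k \<noteq> 0 \<longrightarrow> k \<le> n \<and> degree (coeff R k) \<le> n - k)"

definition ttop :: "nat \<Rightarrow> 'a::comm_ring_1 poly poly \<Rightarrow> 'a" where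
  "ttop n R = coeff (coeff R 0) n"

lemma tdeg_deg0: "tdeg n R \<Longrightarrow> degree (coeff R 0) \<le> n"
  unfolding tdeg_def by (cases "coeff R 0 = 0") auto

lemma tdeg_mult:
  fixes p q :: "'a::comm_ring_1 poly poly"
  assumes p: "tdeg n p" and q: "tdeg m q"
  shows "tdeg (n + m) (p * q)"
  unfolding tdeg_def
proof (intro allI impI)
  fix k assume nz: "coeff (p * q) k \<noteq> 0"
  have ce: "coeff (p * q) k = (\<Sum>j\<le>k. coeff p j * coeff q (k - j))" by (rule coeff_mult)
  have tm: "coeff p j * coeff q (k - j) \<noteq> 0 \<Longrightarrow> j \<le> n \<and> k - j \<le> m \<and>
      degree (coeff p j * coeff q (k - j)) \<le> n + m - k" if "j \<le> k" for j
  proof -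
    assume t: "coeff p j * coeff q (k - j) \<noteq> 0"
    hence a: "coeff p j \<noteq> 0" "coeff q (k - j) \<noteq> 0" by auto
    have "j \<le> n" "degree (coeff p j) \<le> n - j" using p a(1) unfolding tdeg_def by auto
    moreover have "k - j \<le> m" "degree (coeff q (k - j)) \<le> m - (k - j)" using q a(2) unfolding tdeg_def by auto
    moreover have "degree (coeff p j * coeff q (k - j)) \<le> degree (coeff p j) + degree (coeff q (k - j))"
      by (rule degree_mult_le)
    ultimately show ?thesis using that by linarith
  qed
  obtain j where j: "j \<le> k" "coeff p j * coeff q (k - j) \<noteq> 0"
  proof (rule ccontr)
    assume "\<not> thesis"
    hence "\<forall>j\<le>k. coeff p j * coeff q (k - j) = 0" using that by blast
    hence "coeff (p * q) k = 0" unfolding ce by (intro sum.neutral) auto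
    with nz show False by simp
  qed
  have kle: "k \<le> n + m" using tm[OF j] by linarith
  have "degree (coeff (p * q) k) \<le> n + m - k"
    unfolding ce
  proof (rule degree_sum_le)
    fix j assume "j \<in> {..k}"
    thus "degree (coeff p j * coeff q (k - j)) \<le> n + m - k"
      using tm[of j] by (cases "coeff p j * coeff q (k - j) = 0") auto
  qed simp
  thus "k \<le> n + m \<and> degree (coeff (p * q) k) \<le> n + m - k" using kle by simp
qed

lemma top_mult:
  fixes p q :: "'a::comm_ring_1 poly poly"
  assumes p: "tdeg n p" and q: "tdeg m q"
  shows "ttop (n + m) (p * q) = ttop n p * ttop m q"
  unfolding ttop_def coeff_mult_0
  by (rule coeff_mult_top[OF tdeg_deg0[OF p] tdeg_deg0[OF q]])

lemma tdeg_one: "tdeg 0 (1 :: 'a::comm_ring_1 poly poly)" and top_one: "ttop 0 (1 :: 'a::comm_ring_1 poly poly) = 1"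
  by (auto simp: tdeg_def ttop_def coeff_1)

lemma tdeg_power: "tdeg n p \<Longrightarrow> tdeg (n * k) (p ^ k)"
  by (induction k) (simp_all add: tdeg_one tdeg_mult)

lemma top_power: "tdeg n p \<Longrightarrow> ttop (n * k) (p ^ k) = ttop n p ^ k"
proof (induction k)
  case 0 thus ?case by (simp add: top_one)
next
  case (Suc k)
  have "ttop (n * Suc k) (p ^ Suc k) = ttop (n + n * k) (p * p ^ k)" by simp
  also have "\<dots> = ttop n p * ttop (n * k) (p ^ k)" by (rule top_mult[OF Suc.prems tdeg_power[OF Suc.prems]])
  finally show ?case using Suc by simp
qed

lemma tdeg_prod:
  fixes f :: "'b \<Rightarrow> 'a::comm_ring_1 poly poly"
  assumes "finite I" "\<And>i. i \<in> I \<Longrightarrow> tdeg (n i) (f i)"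
  shows "tdeg (sum n I) (prod f I) \<and> ttop (sum n I) (prod f I) = (\<Prod>i\<in>I. ttop (n i) (f i))"
  using assms
proof (induction I rule: finite_induct)
  case empty thus ?case by (simp add: tdeg_one top_one)
next
  case (insert i I)
  hence IH: "tdeg (sum n I) (prod f I)" "ttop (sum n I) (prod f I) = (\<Prod>i\<in>I. ttop (n i) (f i))" by auto
  have fi: "tdeg (n i) (f i)" using insert by auto
  show ?case using insert(1,2) tdeg_mult[OF fi IH(1)] top_mult[OF fi IH(1)] IH(2) by simp
qed

lemma tdeg_sum:
  fixes f :: "'b \<Rightarrow> 'a::comm_ring_1 poly poly"
  assumes "finite S" "\<And>s. s \<in> S \<Longrightarrow> tdeg n (f s)"
  shows "tdeg n (sum f S) \<and> ttop n (sum f S) = (\<Sum>s\<in>S. ttop n (f s))"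
  using assms
proof (induction S rule: finite_induct)
  case empty thus ?case by (simp add: tdeg_def ttop_def)
next
  case (insert s S)
  hence IH: "tdeg n (sum f S)" "ttop n (sum f S) = (\<Sum>s\<in>S. ttop n (f s))" by auto
  have fs: "tdeg n (f s)" using insert by auto
  have "tdeg n (f s + sum f S)" unfolding tdeg_def
  proof (intro allI impI)
    fix k assume nz: "coeff (f s + sum f S) k \<noteq> 0"
    hence "coeff (f s) k \<noteq> 0 \<or> coeff (sum f S) k \<noteq> 0" by auto
    hence kle: "k \<le> n" using fs IH(1) unfolding tdeg_def by blast
    have "degree (coeff (f s) k) \<le> n - k" using fs unfolding tdeg_def by (cases "coeff (f s) k = 0") auto
    moreover have "degree (coeff (sum f S) k) \<le> n - k" using IH(1) unfolding tdeg_def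
      by (cases "coeff (sum f S) k = 0") auto
    ultimately have "degree (coeff (f s) k + coeff (sum f S) k) \<le> n - k"
      by (intro order.trans[OF degree_add_le_max]) auto
    thus "k \<le> n \<and> degree (coeff (f s + sum f S) k) \<le> n - k" using kle by simp
  qed
  moreover have "ttop n (f s + sum f S) = ttop n (f s) + ttop n (sum f S)" by (simp add: ttop_def)
  ultimately show ?case using insert(1,2) IH(2) by simp
qed

lemma tdeg_const: "tdeg 0 [:[:c:]:]" and top_const: "ttop 0 [:[:c:]:] = c"
  by (auto simp: tdeg_def ttop_def coeff_pCons split: nat.split)

lemma tdeg_lin: "tdeg 1 [:[:u, w:], [:v:]:]" and top_lin: "ttop 1 [:[:u, w:], [:v:]:] = w"
  by (auto simp: tdeg_def ttop_def coeff_pCons split: nat.split)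


lemma poly_map_eval: "poly (map_poly (\<lambda>q. poly q t) RR) s = poly (poly RR [:s:]) t"
  by (induction RR) (simp_all add: map_poly_pCons algebra_simps)

lemma coeff_map_eval: "coeff (map_poly (\<lambda>q. poly q t) RR) k = poly (coeff RR k) t"
  by (simp add: coeff_map_poly)

lemma degree_map_eval: "degree (map_poly (\<lambda>q. poly q t) RR) \<le> degree RR"
  by (rule degree_le) (simp add: coeff_map_poly coeff_eq_0)

lemma poly_sum_bound:
  fixes p :: "'a::comm_ring_1 poly"
  assumes "degree p \<le> n" shows "poly p z = (\<Sum>k\<le>n. coeff p k * z ^ k)"
proof -
  have "poly p z = poly (\<Sum>k\<le>n. monom (coeff p k) k) z"
    using poly_as_sum_of_monoms'[OF assms] by simp
  also have "\<dots> = (\<Sum>k\<le>n. coeff p k * z ^ k)" by (simp add: poly_sum poly_monom)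
  finally show ?thesis .
qed

lemma sum_zero_power: "(\<Sum>k\<le>N. (0::real) ^ k * f k) = f 0"
  by (induction N) simp_all

lemma deriv_sum_pow:
  assumes "N \<ge> 1"
  shows "deriv (\<lambda>s. \<Sum>k\<le>N. s ^ k * c k) 0 = (c 1 :: real)"
proof -
  define p where "p = (\<Sum>k\<le>N. monom (c k) k)"
  have pe: "(\<lambda>s. \<Sum>k\<le>N. s ^ k * c k) = poly p"
    by (rule ext) (simp add: p_def poly_sum poly_monom mult.commute)
  have "coeff p 1 = c 1" using assms by (simp add: p_def coeff_sum coeff_monom)
  hence c1: "poly (pderiv p) 0 = c 1" by (simp add: poly_0_coeff_0 coeff_pderiv)
  have "deriv (poly p) 0 = poly (pderiv p) 0" by (rule DERIV_imp_deriv[OF poly_DERIV])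
  thus ?thesis unfolding pe c1 .
qed

context hrep
begin

definition RR :: "real^'n \<Rightarrow> real^'n \<Rightarrow> real^'n \<Rightarrow> complex poly poly" where
  "RR x a b = BP (cv x) (cv a) (cv b)"

definition Rk :: "real^'n \<Rightarrow> real^'n \<Rightarrow> real^'n \<Rightarrow> nat \<Rightarrow> real poly" where
  "Rk x a b k = map_poly Re (coeff (RR x a b) k)"

lemma RR_eval: "poly (map_poly (\<lambda>q. poly q t) (RR x a b)) s = H (cv x + s *s cv a + t *s cv b)"
  by (simp add: poly_map_eval RR_def BP_poly)

lemma coeff_RR_real: "coeff (RR x a b) k = mpo (Rk x a b k)"
proof -
  have "poly (coeff (RR x a b) k) (of_real t) \<in> \<real>" for t
  proof -
    define Q where "Q = map_poly (\<lambda>q. poly q (of_real t)) (RR x a b)"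
    have "Q = mpo (map_poly Re Q)"
    proof (rule real_poly_from_values)
      fix s :: real
      have "poly Q (of_real s) = H (cv (x + s *\<^sub>R a + t *\<^sub>R b))" by (simp add: Q_def RR_eval)
      thus "poly Q (of_real s) \<in> \<real>" by (simp only: H_cv) simp
    qed
    hence "coeff Q k \<in> \<real>" by (metis Reals_of_real coeff_map_poly of_real_0)
    thus ?thesis by (simp add: Q_def coeff_map_eval)
  qed
  thus ?thesis unfolding Rk_def by (rule real_poly_from_values)
qed

lemma h_expand:
  "h (x + s *\<^sub>R a + t *\<^sub>R b) = (\<Sum>k\<le>Suc (degree (RR x a b)). s ^ k * poly (Rk x a b k) t)"
proof -
  define Q where "Q = map_poly (\<lambda>q. poly q (of_real t)) (RR x a b)"
  have dQ: "degree Q \<le> Suc (degree (RR x a b))" unfolding Q_def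
    using degree_map_eval le_SucI by blast
  have "of_real (h (x + s *\<^sub>R a + t *\<^sub>R b)) = poly Q (of_real s)"
    by (simp add: Q_def RR_eval H_cv[symmetric])
  also have "\<dots> = (\<Sum>k\<le>Suc (degree (RR x a b)). coeff Q k * (of_real s) ^ k)"
    by (rule poly_sum_bound[OF dQ])
  also have "\<dots> = of_real (\<Sum>k\<le>Suc (degree (RR x a b)). s ^ k * poly (Rk x a b k) t)"
    by (simp add: Q_def coeff_map_eval coeff_RR_real mult.commute)
  finally show ?thesis by (simp only: of_real_eq_iff)
qed

lemma dirderiv_b:
  "dirderiv b h (x + t *\<^sub>R b) = poly (pderiv (Rk x a b 0)) t"
proof -
  have eq: "(\<lambda>r. h (x + t *\<^sub>R b + r *\<^sub>R b)) = (\<lambda>r. poly (Rk x a b 0) (r + t))"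
  proof
    fix r
    have "h (x + t *\<^sub>R b + r *\<^sub>R b) = h (x + 0 *\<^sub>R a + (r + t) *\<^sub>R b)"
      by (simp add: algebra_simps)
    also have "\<dots> = poly (Rk x a b 0) (r + t)" by (simp only: h_expand sum_zero_power)
    finally show "h (x + t *\<^sub>R b + r *\<^sub>R b) = poly (Rk x a b 0) (r + t)" .
  qed
  have "((\<lambda>r. poly (Rk x a b 0) (r + t)) has_field_derivative poly (pderiv (Rk x a b 0)) t) (at 0)"
    using DERIV_shift[of "poly (Rk x a b 0)" "poly (pderiv (Rk x a b 0)) t" 0 t] poly_DERIV by simp
  thus ?thesis unfolding dirderiv_def eq by (rule DERIV_imp_deriv)
qed

lemma h_line_b: "h (x + t *\<^sub>R b) = poly (Rk x a b 0) t"
  using h_expand[of x 0 a t b] by (simp only: sum_zero_power) simp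

lemma dirderiv_a:
  "dirderiv a h (x + t *\<^sub>R b) = poly (Rk x a b 1) t"
proof -
  have eq: "(\<lambda>s. h (x + t *\<^sub>R b + s *\<^sub>R a)) = (\<lambda>s. \<Sum>k\<le>Suc (degree (RR x a b)). s ^ k * poly (Rk x a b k) t)"
  proof (rule ext)
    fix s
    have "x + t *\<^sub>R b + s *\<^sub>R a = x + s *\<^sub>R a + t *\<^sub>R b" by (simp add: algebra_simps)
    thus "h (x + t *\<^sub>R b + s *\<^sub>R a) = (\<Sum>k\<le>Suc (degree (RR x a b)). s ^ k * poly (Rk x a b k) t)"
      by (simp only: h_expand)
  qed
  show ?thesis unfolding dirderiv_def eq by (rule deriv_sum_pow) simp
qed

lemma dirderiv_ab:
  "dirderiv a (\<lambda>y. h y - dirderiv b h y) (x + t *\<^sub>R b) = poly (Rk x a b 1) t - poly (pderiv (Rk x a b 1)) t"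
proof -
  define N where "N = Suc (degree (RR x a b))"
  have db: "dirderiv b h (x + t *\<^sub>R b + s *\<^sub>R a) = (\<Sum>k\<le>N. s ^ k * poly (pderiv (Rk x a b k)) t)" for s
  proof -
    have eq: "(\<lambda>r. h (x + t *\<^sub>R b + s *\<^sub>R a + r *\<^sub>R b)) = (\<lambda>r. \<Sum>k\<le>N. s ^ k * poly (Rk x a b k) (r + t))"
    proof (rule ext)
      fix r
      have "x + t *\<^sub>R b + s *\<^sub>R a + r *\<^sub>R b = x + s *\<^sub>R a + (r + t) *\<^sub>R b" by (simp add: algebra_simps)
      thus "h (x + t *\<^sub>R b + s *\<^sub>R a + r *\<^sub>R b) = (\<Sum>k\<le>N. s ^ k * poly (Rk x a b k) (r + t))"
        by (simp only: h_expand N_def)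
    qed
    have "((\<lambda>r. \<Sum>k\<le>N. s ^ k * poly (Rk x a b k) (r + t)) has_field_derivative
            (\<Sum>k\<le>N. s ^ k * poly (pderiv (Rk x a b k)) t)) (at 0)"
    proof (rule DERIV_sum)
      fix k
      have "((\<lambda>r. poly (Rk x a b k) (r + t)) has_field_derivative poly (pderiv (Rk x a b k)) t) (at 0)"
        using DERIV_shift[of "poly (Rk x a b k)" "poly (pderiv (Rk x a b k)) t" 0 t] poly_DERIV by simp
      thus "((\<lambda>r. s ^ k * poly (Rk x a b k) (r + t)) has_field_derivative s ^ k * poly (pderiv (Rk x a b k)) t) (at 0)"
        by (rule DERIV_cmult)
    qed
    thus ?thesis unfolding dirderiv_def eq by (rule DERIV_imp_deriv)
  qed
  have eq: "(\<lambda>s. h (x + t *\<^sub>R b + s *\<^sub>R a) - dirderiv b h (x + t *\<^sub>R b + s *\<^sub>R a))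
      = (\<lambda>s. \<Sum>k\<le>N. s ^ k * (poly (Rk x a b k) t - poly (pderiv (Rk x a b k)) t))"
  proof
    fix s
    have "h (x + t *\<^sub>R b + s *\<^sub>R a) = (\<Sum>k\<le>N. s ^ k * poly (Rk x a b k) t)"
    proof -
      have "x + t *\<^sub>R b + s *\<^sub>R a = x + s *\<^sub>R a + t *\<^sub>R b" by (simp add: algebra_simps)
      thus ?thesis by (simp only: h_expand N_def)
    qed
    thus "h (x + t *\<^sub>R b + s *\<^sub>R a) - dirderiv b h (x + t *\<^sub>R b + s *\<^sub>R a)
        = (\<Sum>k\<le>N. s ^ k * (poly (Rk x a b k) t - poly (pderiv (Rk x a b k)) t))"
      by (simp add: db sum_subtractf right_diff_distrib)
  qed
  show ?thesis unfolding dirderiv_def[of a "\<lambda>y. h y - dirderiv b h y"] eq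
    by (rule deriv_sum_pow) (simp add: N_def)
qed

end


context hrep
begin

lemma RR_tdeg: "tdeg d (RR x a b) \<and> ttop d (RR x a b) = of_real (h b)"
proof -
  define L where "L = (\<lambda>i. [:[:cv x $ i, cv b $ i:], [:cv a $ i:]:])"
  define T where "T = (\<lambda>\<alpha>. [:[:of_real (c \<alpha>):]:] * (\<Prod>i\<in>UNIV. L i ^ (\<alpha> i)))"
  have RRe: "RR x a b = (\<Sum>\<alpha>\<in>S. T \<alpha>)" unfolding RR_def BP_def T_def L_def by simp
  have Tt: "tdeg d (T \<alpha>) \<and> ttop d (T \<alpha>) = of_real (c \<alpha>) * (\<Prod>i\<in>UNIV. (cv b $ i) ^ (\<alpha> i))"
    if "\<alpha> \<in> S" for \<alpha>
  proof -
    have Li: "tdeg (1 * \<alpha> i) (L i ^ \<alpha> i) \<and> ttop (1 * \<alpha> i) (L i ^ \<alpha> i) = (cv b $ i) ^ (\<alpha> i)" for i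
    proof -
      have tl: "tdeg 1 (L i)" unfolding L_def by (rule tdeg_lin)
      have "ttop (1 * \<alpha> i) (L i ^ \<alpha> i) = ttop 1 (L i) ^ \<alpha> i" by (rule top_power[OF tl])
      also have "ttop 1 (L i) = cv b $ i" unfolding L_def by (rule top_lin)
      finally show ?thesis using tdeg_power[OF tl, of "\<alpha> i"] by simp
    qed
    have P: "tdeg (\<Sum>i\<in>UNIV. 1 * \<alpha> i) (\<Prod>i\<in>UNIV. L i ^ (\<alpha> i)) \<and>
             ttop (\<Sum>i\<in>UNIV. 1 * \<alpha> i) (\<Prod>i\<in>UNIV. L i ^ (\<alpha> i)) = (\<Prod>i\<in>UNIV. (cv b $ i) ^ (\<alpha> i))"
      using tdeg_prod[of UNIV "\<lambda>i. 1 * \<alpha> i" "\<lambda>i. L i ^ \<alpha> i"] Li by simp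
    hence P': "tdeg d (\<Prod>i\<in>UNIV. L i ^ (\<alpha> i)) \<and>
             ttop d (\<Prod>i\<in>UNIV. L i ^ (\<alpha> i)) = (\<Prod>i\<in>UNIV. (cv b $ i) ^ (\<alpha> i))"
      using degS[OF that] by simp
    have "tdeg (0 + d) (T \<alpha>)" unfolding T_def by (rule tdeg_mult[OF tdeg_const]) (use P' in blast)
    moreover have "ttop (0 + d) (T \<alpha>) = of_real (c \<alpha>) * (\<Prod>i\<in>UNIV. (cv b $ i) ^ (\<alpha> i))"
      unfolding T_def by (subst top_mult[OF tdeg_const]) (use P' top_const in auto)
    ultimately show ?thesis by simp
  qed
  have "tdeg d (\<Sum>\<alpha>\<in>S. T \<alpha>) \<and> ttop d (\<Sum>\<alpha>\<in>S. T \<alpha>) = (\<Sum>\<alpha>\<in>S. ttop d (T \<alpha>))"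
    by (rule tdeg_sum[OF finS]) (use Tt in blast)
  moreover have "(\<Sum>\<alpha>\<in>S. ttop d (T \<alpha>)) = H (cv b)"
    unfolding H_def using Tt by (intro sum.cong refl) auto
  ultimately show ?thesis unfolding RRe by (simp add: H_cv)
qed

lemma degree_B: "h b \<noteq> 0 \<Longrightarrow> degree (Rk x a b 0) = d"
proof -
  assume hb: "h b \<noteq> 0"
  have T: "tdeg d (RR x a b)" "ttop d (RR x a b) = of_real (h b)" using RR_tdeg by auto
  have le: "degree (coeff (RR x a b) 0) \<le> d" by (rule tdeg_deg0[OF T(1)])
  have "coeff (coeff (RR x a b) 0) d \<noteq> 0" using T(2) hb by (simp add: ttop_def)
  hence "degree (coeff (RR x a b) 0) \<ge> d" by (rule le_degree)
  with le have "degree (coeff (RR x a b) 0) = d" by simp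
  thus ?thesis by (simp add: coeff_RR_real)
qed

lemma degree_A: "Rk x a b 1 \<noteq> 0 \<Longrightarrow> 1 \<le> d \<and> degree (Rk x a b 1) \<le> d - 1"
proof -
  assume nz: "Rk x a b 1 \<noteq> 0"
  hence "coeff (RR x a b) 1 \<noteq> 0" by (simp add: coeff_RR_real)
  hence "1 \<le> d \<and> degree (coeff (RR x a b) 1) \<le> d - 1" using RR_tdeg unfolding tdeg_def by blast
  thus ?thesis by (simp add: coeff_RR_real)
qed

theorem main_loc:
  assumes he: "hypC e" and x: "x \<in> hcone h e" and a: "a \<in> hcone h e" and b: "b \<in> hcone h e"
    and d1: "\<delta> > 1" and hyp: "xi b h x \<ge> \<delta> / (\<delta> - 1)"
  shows "xi a (\<lambda>y. h y - dirderiv b h y) (x + \<delta> *\<^sub>R b) \<ge> xi a h x"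
proof -
  define A where "A = Rk x a b 1"
  define B where "B = Rk x a b 0"
  have hb: "hypC b" by (rule garding[OF he b])
  have hx0: "h x \<noteq> 0" by (rule hcone_nz[OF x])
  have hb0: "h b \<noteq> 0" by (rule hcone_nz[OF b])
  have B0: "poly B 0 = h x" using h_line_b[of x 0 b a] by (simp add: B_def)
  have Bnz: "B \<noteq> 0" using B0 hx0 by auto
  have xt: "x + t *\<^sub>R b \<in> hcone h e" if "t \<ge> 0" for t
  proof (cases "t = 0")
    case True thus ?thesis using x by simp
  next
    case False
    hence "t > 0" using that by simp
    thus ?thesis using hcone_add[OF he x hcone_scale[OF b]] by simp
  qed
  have evalB: "poly (mpo B) z = H (cv x + z *s cv b)" for z
  proof -
    have "poly (mpo B) z = poly (coeff (RR x a b) 0) z" by (simp add: B_def coeff_RR_real)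
    also have "\<dots> = coeff (map_poly (\<lambda>q. poly q z) (RR x a b)) 0" by (simp add: coeff_map_eval)
    also have "\<dots> = poly (map_poly (\<lambda>q. poly q z) (RR x a b)) 0" by (simp add: poly_0_coeff_0)
    also have "\<dots> = H (cv x + z *s cv b)" by (simp add: RR_eval)
    finally show ?thesis .
  qed
  have rootsB: "Im z = 0 \<and> Re z < 0" if z0: "poly (mpo B) z = 0" for z
  proof -
    have Hz: "H (cv x + z *s cv b) = 0" using z0 evalB by simp
    hence iz: "Im z = 0" using hb unfolding hypC_def by blast
    hence ze: "z = of_real (Re z)" by (simp add: complex_eq_iff)
    have "H (cv (x + Re z *\<^sub>R b)) = 0" using Hz ze by (metis cv_add cv_scale)
    hence "h (x + Re z *\<^sub>R b) = 0" by (simp only: H_cv of_real_eq_0_iff)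
    hence "\<not> Re z \<ge> 0" using xt hcone_nz by blast
    thus ?thesis using iz by simp
  qed
  have pick: "Im (poly (mpo A) z / poly (mpo B) z) \<le> 0" if iz: "Im z > 0" for z
  proof -
    define Q where "Q = map_poly (\<lambda>q. poly q z) (RR x a b)"
    have Qs: "poly Q s = H (cv x + s *s cv a + z *s cv b)" for s by (simp add: Q_def RR_eval)
    have Q0: "poly Q 0 \<noteq> 0"
    proof
      assume "poly Q 0 = 0"
      hence "H (cv x + z *s cv b) = 0" using Qs[of 0] by simp
      hence "Im z = 0" using hb unfolding hypC_def by blast
      thus False using iz by simp
    qed
    have roots: "Im s \<le> 0" if "poly Q s = 0" for s
    proof (rule ccontr)
      assume "\<not> Im s \<le> 0"
      hence "H (cv x + s *s cv a + z *s cv b) \<noteq> 0"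
        using stability[OF he x a b, of s z] iz by simp
      thus False using that Qs by simp
    qed
    have "Im (coeff Q 1 / coeff Q 0) \<le> 0" by (rule logderiv_pick[OF Q0 roots])
    moreover have "coeff Q 1 = poly (mpo A) z" "coeff Q 0 = poly (mpo B) z"
      by (simp_all add: Q_def coeff_map_eval A_def B_def coeff_RR_real)
    ultimately show ?thesis by simp
  qed
  have deg: "degree A < degree B" if "A \<noteq> 0"
    using degree_A[of x a b] degree_B[OF hb0, of x a] that unfolding A_def B_def by linarith
  obtain P r where PF: "finite P" "\<forall>p\<in>P. p < 0 \<and> r p \<ge> 0"
      "\<forall>t. poly B t \<noteq> 0 \<longrightarrow> poly A t / poly B t = (\<Sum>p\<in>P. r p / (t - p))"
    using pick_pf[OF Bnz deg rootsB pick] by blast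
  obtain M where M: "B = smult (lead_coeff B) (\<Prod>p\<in>#M. [:-p, 1:])" "\<forall>p\<in>#M. poly B p = 0"
    using real_split[OF Bnz] rootsB by blast
  have Mneg: "p < 0" if "p \<in># M" for p
    using rootsB[of "of_real p"] M(2) that by simp
  have lc: "lead_coeff B \<noteq> 0" using Bnz by simp
  have xiB: "xi b h x = poly B 0 / poly (pderiv B) 0"
    using dirderiv_b[of b x 0 a] B0 by (simp add: xi_def B_def)
  have xiA: "xi a h x = poly B 0 / poly A 0"
    using dirderiv_a[of a x 0 b] B0 by (simp add: xi_def A_def)
  have xiL: "xi a (\<lambda>y. h y - dirderiv b h y) (x + \<delta> *\<^sub>R b)
      = (poly B \<delta> - poly (pderiv B) \<delta>) / (poly A \<delta> - poly (pderiv A) \<delta>)"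
    unfolding xi_def dirderiv_ab[of a b x \<delta>] dirderiv_b[of b x \<delta> a] h_line_b[of x \<delta> b a]
    by (simp add: A_def B_def)
  show ?thesis unfolding xiL xiA
    by (rule final_ineq[OF d1 M(1) lc Mneg PF(1) _ _ ]) (use PF hyp xiB in auto)
qed

end

theorem lemma4p3:
  fixes h :: "real^'n \<Rightarrow> real" and e x :: "real^'n"
    and v :: "nat \<Rightarrow> real^'n" and m i j :: nat and \<delta> :: real
  assumes "hyperbolic h e"
    and "\<forall>k\<in>{1..m}. v k \<in> hcone h e"
    and "x \<in> hcone h e"
    and "i \<in> {1..m}" and "j \<in> {1..m}"
    and "\<delta> > 1"
    and "xi (v j) h x \<ge> \<delta> / (\<delta> - 1)"
  shows "xi (v i) (\<lambda>y. h y - dirderiv (v j) h y) (x + \<delta> *\<^sub>R v j) \<ge> xi (v i) h x"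
proof -
  obtain d where "homogeneous_poly d h" using assms(1) unfolding hyperbolic_def by blast
  then obtain S c where rep: "hom_rep d S c h" using homogeneous_rep by blast
  interpret hrep d S c h by (rule hrep.intro[OF rep])
  have he: "hypC e" by (rule hyperbolic_hypC[OF assms(1)])
  show ?thesis
    by (rule main_loc[OF he assms(3) _ _ assms(6,7)]) (use assms(2,4,5) in auto)
qed

end
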